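(* Let $F:D_1\to\mathbb{C}^n$ be analytic with $F(z)=Az+f(z)$, $f(0)=0$, $Df(0)=0$, $A\in\mathbb{C}^{n\times n}$. Let $\hat H=\sum_{|\alpha|\ge1}h_\alpha z^\alpha$ ($h_\alpha\in\mathbb{C}^n$) be a formal power series with $\hat H(z)=z+O(|z|^2)$ which formally satisfies $D\hat H(z)\cdot F(z)=A\hat H(z)$, and which is Gevrey-$s$ ($s>0$): there are $A_1,B_1>0$ with $|h_\alpha|\le A_1B_1^{-s|\alpha|}(|\alpha|!)^s$ for all $|\alpha|\ge1$. For each positive integer $N$ let $\mathcal{H}_N(z)=\sum_{1\le|\alpha|\le N}h_\alpha z^\alpha$ and $\mathcal{R}_N(z)=D\mathcal{H}_N(z)\cdot F(z)-A\mathcal{H}_N(z)$. Then: (1) $\partial_z^\alpha\mathcal{R}_N(0)=0$ for all $\alpha\in\mathbb{N}^n$ with $|\alpha|\le N$; (2) for every $0<r<1$ there exist positive constants $A_2,B_2$ (independent of $N$ and $\alpha$) such that for all $N$ and all $|\alpha|\ge N+1$, $\big|\frac{1}{\alpha!}\partial_z^\alpha\mathcal{R}_N(0)\big|\le A_2r^{-|\alpha|}B_2^{-sN}(N!)^s$; (3) for every $0<r<1$ there exist positive constants $A_3,B_3$ (independent of $N$) such that for all $N$ and all $|z|<r/4$, $|\mathcal{R}_N(z)|\le A_3B_3^{-sN}(N!)^s\big(|z|/r\big)^{N+1}$.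
   Context: $D_1=\{z\in\mathbb{C}^n:|z_j|<1\}$; $|z|=\max_j|z_j|$; for $\alpha\in\mathbb{N}^n$, $|\alpha|=\sum\alpha_j$, $\alpha!=\alpha_1!\cdots\alpha_n!$, $z^\alpha=z_1^{\alpha_1}\cdots z_n^{\alpha_n}$, and $\frac{1}{\alpha!}\partial_z^\alpha=\frac{1}{\alpha_1!\cdots\alpha_n!}\frac{\partial^{|\alpha|}}{\partial z_1^{\alpha_1}\cdots\partial z_n^{\alpha_n}}$. *)

theory Defs
  imports "HOL-Analysis.Analysis"
begin

text \<open>Vectors in C^n are represented as complex^'n, with 'n a finite index type
  (n = CARD('n)).  Multi-indices are functions 'n \<Rightarrow> nat.\<close>

definition mdeg :: "('n::finite \<Rightarrow> nat) \<Rightarrow> nat" where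
  "mdeg \<alpha> = (\<Sum>j\<in>UNIV. \<alpha> j)"

definition mfact :: "('n::finite \<Rightarrow> nat) \<Rightarrow> real" where
  "mfact \<alpha> = (\<Prod>j\<in>UNIV. fact (\<alpha> j))"

definition mpow :: "complex^'n::finite \<Rightarrow> ('n \<Rightarrow> nat) \<Rightarrow> complex" where
  "mpow z \<alpha> = (\<Prod>j\<in>UNIV. (z $ j) ^ (\<alpha> j))"

definition eidx :: "'n \<Rightarrow> ('n \<Rightarrow> nat)" where
  "eidx j = (\<lambda>k. if k = j then 1 else 0)"

definition supn :: "complex^'n::finite \<Rightarrow> real" where
  "supn z = Max (range (\<lambda>j. cmod (z $ j)))"

definition polydisc1 :: "(complex^'n::finite) set" where
  "polydisc1 = {z. \<forall>j. cmod (z $ j) < 1}"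

definition analytic_vec :: "(complex^'n::finite) set \<Rightarrow> (complex^'n \<Rightarrow> complex^'m) \<Rightarrow> bool" where
  "analytic_vec S F \<longleftrightarrow> (\<forall>w\<in>S. \<exists>e>0. \<exists>c :: ('n \<Rightarrow> nat) \<Rightarrow> complex^'m.
      \<forall>z. supn (z - w) < e \<longrightarrow>
        ((\<lambda>\<alpha>. \<chi> i. mpow (z - w) \<alpha> * c \<alpha> $ i) has_sum F z) UNIV)"

definition pd :: "'n \<Rightarrow> (complex^'n::finite \<Rightarrow> complex) \<Rightarrow> complex^'n \<Rightarrow> complex" where
  "pd j g z = deriv (\<lambda>t. g (\<chi> k. if k = j then t else z $ k)) (z $ j)"

text \<open>higher partial derivative \<partial>^\<alpha>: apply pd along a list of directions in which
  each j occurs \<alpha> j times (order irrelevant for analytic functions)\<close>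
definition pdiff :: "('n::finite \<Rightarrow> nat) \<Rightarrow> (complex^'n \<Rightarrow> complex) \<Rightarrow> complex^'n \<Rightarrow> complex" where
  "pdiff \<alpha> g = foldr pd (SOME L. \<forall>j. count_list L j = \<alpha> j) g"

definition tcoeff :: "(complex^'n::finite \<Rightarrow> complex^'m) \<Rightarrow> ('n \<Rightarrow> nat) \<Rightarrow> complex^'m" where
  "tcoeff F \<alpha> = (\<chi> i. pdiff \<alpha> (\<lambda>z. F z $ i) 0 / of_real (mfact \<alpha>))"

definition truncH :: "(('n::finite \<Rightarrow> nat) \<Rightarrow> complex^'n) \<Rightarrow> nat \<Rightarrow> complex^'n \<Rightarrow> complex^'n" where
  "truncH h N z = (\<Sum>\<alpha>\<in>{\<alpha>. 1 \<le> mdeg \<alpha> \<and> mdeg \<alpha> \<le> N}. \<chi> i. mpow z \<alpha> * h \<alpha> $ i)"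

definition remR :: "complex^'n^'n \<Rightarrow> (complex^'n::finite \<Rightarrow> complex^'n) \<Rightarrow>
     (('n \<Rightarrow> nat) \<Rightarrow> complex^'n) \<Rightarrow> nat \<Rightarrow> complex^'n \<Rightarrow> complex^'n" where
  "remR A F h N z = (\<chi> i. (\<Sum>j\<in>UNIV. pd j (\<lambda>w. truncH h N w $ i) z * F z $ j))
                     - A *v truncH h N z"

text \<open>formal identity D\<hat>H \<cdot> F = A \<hat>H, coefficientwise, with F expanded in its Taylor series at 0:
  coefficient of z^\<gamma> of \<Sum>_j \<partial>_j \<hat>H_i F_j equals that of (A \<hat>H)_i\<close>
definition formal_conj :: "complex^'n^'n \<Rightarrow> (complex^'n::finite \<Rightarrow> complex^'n) \<Rightarrow>
     (('n \<Rightarrow> nat) \<Rightarrow> complex^'n) \<Rightarrow> bool" where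
  "formal_conj A F h \<longleftrightarrow> (\<forall>\<gamma> i.
     (\<Sum>j\<in>UNIV. \<Sum>\<alpha>\<in>{\<alpha>. (\<forall>k. \<alpha> k \<le> \<gamma> k + eidx j k) \<and> 1 \<le> \<alpha> j}.
         of_nat (\<alpha> j) * h \<alpha> $ i * tcoeff F (\<lambda>k. \<gamma> k + eidx j k - \<alpha> k) $ j)
     = (A *v h \<gamma>) $ i)"

end

theory Submission
  imports Defs "HOL-Complex_Analysis.Complex_Analysis"
begin


lemma supn_ge: "cmod (z $ j) \<le> supn z"
  unfolding supn_def by (rule Max_ge) auto

lemma supn_le_iff: "supn z \<le> X \<longleftrightarrow> (\<forall>j. cmod (z $ j) \<le> X)"
  unfolding supn_def by (subst Max_le_iff) auto

lemma supn_less_iff: "supn z < X \<longleftrightarrow> (\<forall>j. cmod (z $ j) < X)"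
  unfolding supn_def by (subst Max_less_iff) auto

lemma supn_attained: obtains j where "supn z = cmod (z $ j)"
proof -
  have "supn z \<in> range (\<lambda>j. cmod (z $ j))"
    unfolding supn_def by (rule Max_in) auto
  thus ?thesis using that by auto
qed

lemma supn_nonneg: "0 \<le> supn z"
  using supn_ge[of z] norm_ge_zero order_trans by blast

lemma supn_le_norm: "supn z \<le> norm z"
  unfolding supn_le_iff by (simp add: Finite_Cartesian_Product.norm_nth_le)

lemma supn_scale: "supn (t *s z) = cmod t * supn z"
proof (rule antisym)
  show "supn (t *s z) \<le> cmod t * supn z"
    unfolding supn_le_iff by (auto simp: norm_mult intro: mult_left_mono supn_ge)
  obtain j where "supn z = cmod (z $ j)" by (rule supn_attained)
  then show "cmod t * supn z \<le> supn (t *s z)"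
    using supn_ge[of "t *s z" j] by (simp add: norm_mult)
qed

lemma supn_zero [simp]: "supn (0::complex^'n) = 0"
  using supn_scale[of 0 "0::complex^'n"] by simp

lemma supn_triangle: "supn (a + b) \<le> supn a + supn b"
  unfolding supn_le_iff
  by (metis add_mono norm_triangle_ineq order_trans supn_ge vector_add_component)

lemma supn_minus_commute: "supn (a - b) = supn (b - a)"
  unfolding supn_def by (simp add: norm_minus_commute)

lemma supn_const: "supn (\<chi> k::'n::finite. c) = cmod c"
proof (rule antisym)
  show "supn (\<chi> k::'n. c) \<le> cmod c" unfolding supn_le_iff by simp
  show "cmod c \<le> supn (\<chi> k::'n. c)" using supn_ge[of "\<chi> k::'n. c" undefined] by simp
qed

lemma finite_mdeg_le: "finite {\<alpha>::'n::finite\<Rightarrow>nat. mdeg \<alpha> \<le> N}"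
proof (rule finite_subset)
  show "{\<alpha>::'n\<Rightarrow>nat. mdeg \<alpha> \<le> N} \<subseteq> PiE UNIV (\<lambda>_. {..N})"
  proof
    fix \<alpha> :: "'n \<Rightarrow> nat" assume "\<alpha> \<in> {\<alpha>. mdeg \<alpha> \<le> N}"
    then have "\<alpha> j \<le> N" for j
      unfolding mdeg_def using member_le_sum[of j UNIV \<alpha>] by auto
    then show "\<alpha> \<in> PiE UNIV (\<lambda>_. {..N})" by auto
  qed
  show "finite (PiE (UNIV::'n set) (\<lambda>_. {..N}))" by (intro finite_PiE) auto
qed

lemma mdeg_ge_comp: "\<alpha> j \<le> mdeg \<alpha>"
  unfolding mdeg_def by (rule member_le_sum) auto

lemma mdeg_eq_0_iff: "mdeg \<alpha> = 0 \<longleftrightarrow> \<alpha> = (\<lambda>_. 0)"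
  unfolding mdeg_def by (auto simp: fun_eq_iff)

lemma norm_mpow_le: "cmod (mpow z \<alpha>) \<le> supn z ^ mdeg \<alpha>"
proof -
  have "cmod (mpow z \<alpha>) = (\<Prod>j\<in>UNIV. cmod (z $ j) ^ \<alpha> j)"
    unfolding mpow_def by (simp add: prod_norm[symmetric] norm_power)
  also have "\<dots> \<le> (\<Prod>j\<in>UNIV. supn z ^ \<alpha> j)"
    by (intro prod_mono conjI power_mono supn_ge) auto
  also have "\<dots> = supn z ^ mdeg \<alpha>"
    unfolding mdeg_def by (simp add: power_sum)
  finally show ?thesis .
qed

lemma mpow_scale: "mpow (t *s z) \<alpha> = t ^ mdeg \<alpha> * mpow z \<alpha>"
  unfolding mpow_def mdeg_def by (simp add: power_mult_distrib prod.distrib power_sum)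

lemma mpow_const: "mpow (\<chi> k. c) \<alpha> = c ^ mdeg \<alpha>"
  unfolding mpow_def mdeg_def by (simp add: power_sum)

lemma mpow_zero: "mpow 0 \<alpha> = (if \<alpha> = (\<lambda>_. 0) then 1 else 0)"
proof (cases "\<alpha> = (\<lambda>_. 0)")
  case True then show ?thesis by (simp add: mpow_def)
next
  case False
  then obtain j where "\<alpha> j \<noteq> 0" by auto
  then show ?thesis using False unfolding mpow_def
    by (auto simp: prod_zero_iff)
qed

definition addm :: "('n \<Rightarrow> nat) \<Rightarrow> ('n \<Rightarrow> nat) \<Rightarrow> ('n \<Rightarrow> nat)" where
  "addm \<alpha> \<beta> = (\<lambda>k. \<alpha> k + \<beta> k)"

lemma mpow_addm: "mpow z (addm \<alpha> \<beta>) = mpow z \<alpha> * mpow z \<beta>"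
  unfolding mpow_def addm_def by (simp add: power_add prod.distrib)

lemma mdeg_addm: "mdeg (addm \<alpha> \<beta>) = mdeg \<alpha> + mdeg \<beta>"
  unfolding mdeg_def addm_def by (simp add: sum.distrib)

lemma mdeg_eidx: "mdeg (eidx j) = 1"
  unfolding mdeg_def eidx_def by simp

lemma inj_addm: "inj (addm \<beta>)"
  by (auto simp: inj_def addm_def fun_eq_iff)

lemma has_sum_diff:
  fixes f g :: "'a \<Rightarrow> 'b::topological_ab_group_add"
  assumes "(f has_sum a) A" "(g has_sum b) A"
  shows "((\<lambda>x. f x - g x) has_sum (a - b)) A"
proof -
  have "((\<lambda>x. - g x) has_sum (- b)) A" using assms(2) by (simp add: has_sum_uminus)
  from has_sum_add[OF assms(1) this] show ?thesis by simp
qed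

lemma has_sum_sum:
  fixes f :: "'i \<Rightarrow> 'a \<Rightarrow> 'b::topological_comm_monoid_add"
  assumes "finite I" "\<And>i. i \<in> I \<Longrightarrow> (f i has_sum s i) A"
  shows "((\<lambda>x. \<Sum>i\<in>I. f i x) has_sum (\<Sum>i\<in>I. s i)) A"
  using assms
proof (induction I rule: finite_induct)
  case empty then show ?case by simp
next
  case (insert i I)
  then show ?case by (simp add: has_sum_add)
qed

lemma geom_multi_partial:
  fixes q :: real
  assumes "0 \<le> q" "q < 1" "finite X"
  shows "(\<Sum>\<alpha>\<in>X. q ^ mdeg (\<alpha>::'n::finite\<Rightarrow>nat)) \<le> (1/(1-q)) ^ CARD('n)"
proof -
  define K where "K = (\<Sum>\<alpha>\<in>X. mdeg \<alpha>)"
  have sub: "X \<subseteq> PiE UNIV (\<lambda>_. {..K})"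
  proof
    fix \<alpha> assume a: "\<alpha> \<in> X"
    have "\<alpha> j \<le> K" for j
      using mdeg_ge_comp[of \<alpha> j] member_le_sum[OF a, of mdeg] assms(3) unfolding K_def by linarith
    then show "\<alpha> \<in> PiE UNIV (\<lambda>_. {..K})" by auto
  qed
  have "(\<Sum>\<alpha>\<in>X. q ^ mdeg \<alpha>) \<le> (\<Sum>\<alpha>\<in>PiE (UNIV::'n set) (\<lambda>_. {..K}). q ^ mdeg \<alpha>)"
    using sub apply (intro sum_mono2) apply (auto simp: assms intro!: finite_PiE) done
  also have "\<dots> = (\<Sum>\<alpha>\<in>PiE (UNIV::'n set) (\<lambda>_. {..K}). \<Prod>j\<in>UNIV. q ^ \<alpha> j)"
    unfolding mdeg_def by (simp add: power_sum)
  also have "\<dots> = (\<Prod>j\<in>(UNIV::'n set). \<Sum>k\<le>K. q ^ k)"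
    by (subst prod_sum_PiE) auto
  also have "\<dots> \<le> (\<Prod>j\<in>(UNIV::'n set). 1/(1-q))"
  proof (intro prod_mono conjI)
    fix j :: 'n
    show "0 \<le> (\<Sum>k\<le>K. q ^ k)" using assms by (auto intro: sum_nonneg)
    have "(\<Sum>k\<le>K. q ^ k) = (1 - q ^ Suc K) / (1 - q)"
      using assms by (subst sum_gp_basic[symmetric]) (auto simp: field_simps atMost_atLeast0 lessThan_Suc_atMost)
    also have "\<dots> \<le> 1/(1-q)" using assms by (intro divide_right_mono) auto
    finally show "(\<Sum>k\<le>K. q ^ k) \<le> 1/(1-q)" .
  qed
  finally show ?thesis by simp
qed

lemma geom_multi_summable:
  fixes q :: real
  assumes "0 \<le> q" "q < 1"
  shows "(\<lambda>\<alpha>::'n::finite\<Rightarrow>nat. q ^ mdeg \<alpha>) summable_on UNIV"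
    and "(\<Sum>\<^sub>\<infinity>\<alpha>::'n\<Rightarrow>nat. q ^ mdeg \<alpha>) \<le> (1/(1-q)) ^ CARD('n)"
proof -
  show s: "(\<lambda>\<alpha>::'n::finite\<Rightarrow>nat. q ^ mdeg \<alpha>) summable_on UNIV"
    by (rule nonneg_bounded_partial_sums_imp_summable_on[where C="(1/(1-q)) ^ CARD('n)"])
       (use assms in \<open>auto intro!: eventually_finite_subsets_at_top_weakI geom_multi_partial\<close>)
  show "(\<Sum>\<^sub>\<infinity>\<alpha>::'n\<Rightarrow>nat. q ^ mdeg \<alpha>) \<le> (1/(1-q)) ^ CARD('n)"
    by (rule infsum_le_finite_sums[OF s]) (use assms in \<open>auto intro: geom_multi_partial\<close>)
qed


definition psum :: "(('n::finite \<Rightarrow> nat) \<Rightarrow> complex) \<Rightarrow> complex^'n \<Rightarrow> complex" where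
  "psum c z = (\<Sum>\<^sub>\<infinity>\<alpha>. c \<alpha> * mpow z \<alpha>)"

definition ps_conv :: "(('n::finite \<Rightarrow> nat) \<Rightarrow> complex) \<Rightarrow> real \<Rightarrow> bool" where
  "ps_conv c e \<longleftrightarrow> (\<forall>\<rho>. 0 \<le> \<rho> \<longrightarrow> \<rho> < e \<longrightarrow> (\<lambda>\<alpha>. norm (c \<alpha>) * \<rho> ^ mdeg \<alpha>) summable_on UNIV)"

lemma ps_abs:
  assumes "ps_conv c e" "supn z < e"
  shows "(\<lambda>\<alpha>. norm (c \<alpha> * mpow z \<alpha>)) summable_on UNIV"
proof (rule summable_on_comparison_test)
  show "(\<lambda>\<alpha>. norm (c \<alpha>) * supn z ^ mdeg \<alpha>) summable_on UNIV"
    using assms supn_nonneg unfolding ps_conv_def by blast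
  show "norm (c \<alpha> * mpow z \<alpha>) \<le> norm (c \<alpha>) * supn z ^ mdeg \<alpha>" for \<alpha>
    by (simp add: norm_mult mult_left_mono norm_mpow_le)
qed auto

lemma ps_has_sum:
  assumes "ps_conv c e" "supn z < e"
  shows "((\<lambda>\<alpha>. c \<alpha> * mpow z \<alpha>) has_sum psum c z) UNIV"
  unfolding psum_def using abs_summable_summable[OF ps_abs[OF assms]] by simp

lemma tail_small:
  fixes m :: "'a \<Rightarrow> real"
  assumes "(m has_sum S) UNIV" "\<epsilon> > 0"
  shows "eventually (\<lambda>X. finite X \<and> (\<Sum>\<^sub>\<infinity>x\<in>UNIV - X. m x) < \<epsilon>) (finite_subsets_at_top UNIV)"
proof -
  have "(sum m \<longlongrightarrow> S) (finite_subsets_at_top UNIV)" using assms(1) by (simp add: has_sum_def)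
  then have "eventually (\<lambda>X. dist (sum m X) S < \<epsilon>) (finite_subsets_at_top UNIV)"
    using assms(2) tendsto_iff by blast
  moreover have "eventually (\<lambda>X. finite X) (finite_subsets_at_top UNIV)"
    by (rule eventually_finite_subsets_at_top_weakI) auto
  ultimately show ?thesis
  proof eventually_elim
    case (elim X)
    have "(m has_sum (S - sum m X)) (UNIV - X)"
      by (rule has_sum_Diff[OF assms(1)]) (use elim in auto)
    then have "(\<Sum>\<^sub>\<infinity>x\<in>UNIV - X. m x) = S - sum m X" by (rule infsumI)
    with elim show ?case by (auto simp: dist_real_def)
  qed
qed

lemma ps_uniform:
  assumes "ps_conv c e" "0 \<le> \<rho>" "\<rho> < e" "\<And>t. t \<in> K \<Longrightarrow> supn (\<gamma> t) \<le> \<rho>"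
  shows "uniform_limit K (\<lambda>X t. \<Sum>\<alpha>\<in>X. c \<alpha> * mpow (\<gamma> t) \<alpha>) (\<lambda>t. psum c (\<gamma> t))
           (finite_subsets_at_top UNIV)"
  unfolding uniform_limit_iff
proof (intro allI impI)
  fix \<epsilon> :: real assume "\<epsilon> > 0"
  define m where "m \<alpha> = norm (c \<alpha>) * \<rho> ^ mdeg \<alpha>" for \<alpha>
  have ms: "m summable_on UNIV" using assms unfolding ps_conv_def m_def by blast
  then have "(m has_sum infsum m UNIV) UNIV" by simp
  from tail_small[OF this \<open>\<epsilon> > 0\<close>]
  show "\<forall>\<^sub>F X in finite_subsets_at_top UNIV. \<forall>t\<in>K. dist (\<Sum>\<alpha>\<in>X. c \<alpha> * mpow (\<gamma> t) \<alpha>) (psum c (\<gamma> t)) < \<epsilon>"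
  proof eventually_elim
    case (elim X)
    show ?case
    proof
      fix t assume t: "t \<in> K"
      have sg: "supn (\<gamma> t) < e" using assms(3) assms(4)[OF t] by linarith
      have h1: "((\<lambda>\<alpha>. c \<alpha> * mpow (\<gamma> t) \<alpha>) has_sum (psum c (\<gamma> t) - (\<Sum>\<alpha>\<in>X. c \<alpha> * mpow (\<gamma> t) \<alpha>))) (UNIV - X)"
        by (rule has_sum_Diff[OF ps_has_sum[OF assms(1) sg]]) (use elim in auto)
      have h2: "(m has_sum (\<Sum>\<^sub>\<infinity>x\<in>UNIV - X. m x)) (UNIV - X)"
        using summable_on_subset_banach[OF ms, of "UNIV - X"] by simp
      have "norm (psum c (\<gamma> t) - (\<Sum>\<alpha>\<in>X. c \<alpha> * mpow (\<gamma> t) \<alpha>)) \<le> (\<Sum>\<^sub>\<infinity>x\<in>UNIV - X. m x)"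
      proof (rule norm_infsum_le[OF h1 h2])
        fix \<alpha>
        have "cmod (mpow (\<gamma> t) \<alpha>) \<le> \<rho> ^ mdeg \<alpha>"
          using norm_mpow_le[of "\<gamma> t" \<alpha>] power_mono[OF assms(4)[OF t] supn_nonneg, of "mdeg \<alpha>"] by linarith
        then show "norm (c \<alpha> * mpow (\<gamma> t) \<alpha>) \<le> m \<alpha>"
          unfolding m_def norm_mult by (simp add: mult_left_mono)
      qed
      then show "dist (\<Sum>\<alpha>\<in>X. c \<alpha> * mpow (\<gamma> t) \<alpha>) (psum c (\<gamma> t)) < \<epsilon>"
        using elim by (simp add: dist_norm norm_minus_commute)
    qed
  qed
qed

lemma supn_lipschitz: "\<bar>supn a - supn b\<bar> \<le> supn (a - b)"
  using supn_triangle[of "a - b" b] supn_triangle[of "b - a" a] supn_minus_commute[of a b] by auto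

lemma continuous_on_supn: "continuous_on (S::(complex^'n::finite) set) supn"
  unfolding continuous_on_iff
proof (intro ballI allI impI)
  fix x :: "complex^'n" and \<epsilon> :: real
  assume "\<epsilon> > 0"
  show "\<exists>d>0. \<forall>x'\<in>S. dist x' x < d \<longrightarrow> dist (supn x') (supn x) < \<epsilon>"
  proof (intro exI conjI ballI impI)
    fix x' assume "dist x' x < \<epsilon>"
    then show "dist (supn x') (supn x) < \<epsilon>"
      using supn_lipschitz[of x' x] supn_le_norm[of "x' - x"] by (simp add: dist_norm dist_real_def)
  qed (use \<open>\<epsilon> > 0\<close> in auto)
qed

lemma open_supn_less: "open {z. supn (z - a) < r}"
  by (intro open_Collect_less continuous_intros continuous_on_compose2[OF continuous_on_supn]) auto

lemma ps_continuous:
  assumes "ps_conv c e" "supn z0 < e"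
  shows "isCont (psum c) z0"
proof -
  define \<rho> where "\<rho> = (supn z0 + e) / 2"
  have \<rho>: "supn z0 < \<rho>" "\<rho> < e" "0 \<le> \<rho>" using assms supn_nonneg[of z0] unfolding \<rho>_def by auto
  have ul: "uniform_limit {z. supn z \<le> \<rho>} (\<lambda>X t. \<Sum>\<alpha>\<in>X. c \<alpha> * mpow t \<alpha>) (psum c) (finite_subsets_at_top UNIV)"
    using ps_uniform[OF assms(1) \<rho>(3) \<rho>(2), of "{z. supn z \<le> \<rho>}" "\<lambda>t. t"] by simp
  have "continuous_on {z. supn z \<le> \<rho>} (psum c)"
  proof (rule uniform_limit_theorem[OF _ ul])
    show "\<forall>\<^sub>F X in finite_subsets_at_top UNIV. continuous_on {z. supn z \<le> \<rho>} (\<lambda>t. \<Sum>\<alpha>\<in>X. c \<alpha> * mpow t \<alpha>)"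
      unfolding mpow_def by (intro always_eventually allI continuous_intros)
  qed auto
  then have "continuous_on {z. supn (z - 0) < \<rho>} (psum c)"
    by (rule continuous_on_subset) auto
  then show ?thesis
    using open_supn_less[of 0 \<rho>] \<rho>(1) continuous_on_eq_continuous_at by fastforce
qed

lemma mpow_line: "mpow (a + t *s u) \<alpha> = (\<Prod>j\<in>UNIV. (a $ j + t * u $ j) ^ \<alpha> j)"
  unfolding mpow_def by simp

lemma ps_holo_line:
  assumes "ps_conv c e"
  shows "(\<lambda>t. psum c (a + t *s u)) holomorphic_on {t. supn (a + t *s u) < e}"
  unfolding holomorphic_on_def
proof
  fix t0 assume "t0 \<in> {t. supn (a + t *s u) < e}"
  then have t0: "supn (a + t0 *s u) < e" by simp
  define \<rho>1 where "\<rho>1 = supn (a + t0 *s u)"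
  define r where "r = (e - \<rho>1) / (2 * (supn u + 1))"
  define \<rho> where "\<rho> = \<rho>1 + (e - \<rho>1) / 2"
  have r: "r > 0" using t0 supn_nonneg[of u] unfolding r_def \<rho>1_def by auto
  have \<rho>: "0 \<le> \<rho>" "\<rho> < e" using t0 supn_nonneg[of "a + t0 *s u"] unfolding \<rho>_def \<rho>1_def by (auto simp: field_simps)
  have bnd: "supn (a + t *s u) \<le> \<rho>" if "t \<in> cball t0 r" for t
  proof -
    have "a + t *s u = (a + t0 *s u) + (t - t0) *s u" by (simp add: algebra_simps vector_sadd_rdistrib)
    then have "supn (a + t *s u) \<le> \<rho>1 + cmod (t - t0) * supn u"
      using supn_triangle[of "a + t0 *s u" "(t - t0) *s u"] supn_scale[of "t - t0" u]
      unfolding \<rho>1_def by simp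
    also have "cmod (t - t0) * supn u \<le> r * supn u"
      using that supn_nonneg[of u] by (intro mult_right_mono) (auto simp: dist_norm norm_minus_commute)
    also have "r * supn u \<le> (e - \<rho>1) / 2"
    proof -
      have "r * supn u = (e - \<rho>1) / 2 * (supn u / (supn u + 1))"
        unfolding r_def by (simp add: field_simps)
      also have "\<dots> \<le> (e - \<rho>1) / 2 * 1"
        using t0 supn_nonneg[of u] unfolding \<rho>1_def
        by (intro mult_left_mono) auto
      finally show ?thesis by simp
    qed
    finally show ?thesis unfolding \<rho>_def by simp
  qed
  have ul: "uniform_limit (cball t0 r) (\<lambda>X t. \<Sum>\<alpha>\<in>X. c \<alpha> * mpow (a + t *s u) \<alpha>) (\<lambda>t. psum c (a + t *s u)) (finite_subsets_at_top UNIV)"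
    by (rule ps_uniform[OF assms \<rho>]) (use bnd in auto)
  obtain "(\<lambda>t. psum c (a + t *s u)) holomorphic_on ball t0 r"
  proof (rule holomorphic_uniform_limit[OF _ ul])
    show "\<forall>\<^sub>F X in finite_subsets_at_top UNIV. continuous_on (cball t0 r) (\<lambda>t. \<Sum>\<alpha>\<in>X. c \<alpha> * mpow (a + t *s u) \<alpha>) \<and>
         (\<lambda>t. \<Sum>\<alpha>\<in>X. c \<alpha> * mpow (a + t *s u) \<alpha>) holomorphic_on ball t0 r"
      unfolding mpow_line by (intro always_eventually allI conjI continuous_intros holomorphic_intros)
  qed auto
  then have "(\<lambda>t. psum c (a + t *s u)) field_differentiable at t0"
    using r by (intro holomorphic_on_imp_differentiable_at[of _ "ball t0 r"]) auto
  then show "(\<lambda>t. psum c (a + t *s u)) field_differentiable at t0 within {t. supn (a + t *s u) < e}"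
    using field_differentiable_at_within by blast
qed


definition dpar :: "'n \<Rightarrow> (('n \<Rightarrow> nat) \<Rightarrow> complex) \<Rightarrow> (('n \<Rightarrow> nat) \<Rightarrow> complex)" where
  "dpar j c = (\<lambda>\<beta>. of_nat (\<beta> j + 1) * c (addm \<beta> (eidx j)))"

definition upd :: "complex^'n::finite \<Rightarrow> 'n \<Rightarrow> complex \<Rightarrow> complex^'n" where
  "upd z j t = (\<chi> k. if k = j then t else z $ k)"

definition decm :: "'n \<Rightarrow> ('n \<Rightarrow> nat) \<Rightarrow> ('n \<Rightarrow> nat)" where
  "decm j \<alpha> = (\<lambda>k. \<alpha> k - eidx j k)"

lemma upd_same [simp]: "upd z j (z $ j) = z"
  unfolding upd_def by (simp add: vec_eq_iff)

lemma upd_component: "upd z j t $ k = (if k = j then t else z $ k)"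
  unfolding upd_def by simp

lemma mpow_upd: "mpow (upd z j t) \<alpha> = t ^ \<alpha> j * (\<Prod>k\<in>UNIV-{j}. z $ k ^ \<alpha> k)"
  unfolding mpow_def
  by (subst prod.remove[of UNIV j]) (auto simp: upd_component intro!: prod.cong)

lemma decm_addm [simp]: "decm j (addm \<beta> (eidx j)) = \<beta>"
  unfolding decm_def addm_def eidx_def by auto

lemma addm_decm: "\<alpha> j \<noteq> 0 \<Longrightarrow> addm (decm j \<alpha>) (eidx j) = \<alpha>"
  unfolding decm_def addm_def eidx_def by auto

lemma addm_eidx_same [simp]: "addm \<beta> (eidx j) j = \<beta> j + 1"
  unfolding addm_def eidx_def by simp

lemma deriv_mpow_upd:
  "((\<lambda>t. mpow (upd z j t) \<alpha>) has_field_derivative (of_nat (\<alpha> j) * mpow (upd z j t0) (decm j \<alpha>))) (at t0)"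
proof -
  have e: "mpow (upd z j t0) (decm j \<alpha>) = t0 ^ (\<alpha> j - 1) * (\<Prod>k\<in>UNIV-{j}. z $ k ^ \<alpha> k)"
  proof -
    have 1: "decm j \<alpha> j = \<alpha> j - 1" by (simp add: decm_def eidx_def)
    have 2: "(\<Prod>k\<in>UNIV-{j}. z $ k ^ decm j \<alpha> k) = (\<Prod>k\<in>UNIV-{j}. z $ k ^ \<alpha> k)"
      by (rule prod.cong[OF refl]) (simp add: decm_def eidx_def)
    show ?thesis unfolding mpow_upd 1 2 ..
  qed
  show ?thesis unfolding e unfolding mpow_upd
    by (rule derivative_eq_intros refl)+ simp
qed

lemma kq_bound:
  fixes q :: real
  assumes "0 \<le> q" "q < 1"
  shows "real (k + 1) * q ^ k \<le> 1 / (1 - q)"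
proof -
  have "real (k + 1) * q ^ k = (\<Sum>i\<le>k. q ^ k)" by simp
  also have "\<dots> \<le> (\<Sum>i\<le>k. q ^ i)"
    using assms by (intro sum_mono power_decreasing) auto
  also have "\<dots> = (1 - q ^ Suc k) / (1 - q)"
    using assms by (subst sum_gp_basic[symmetric]) (auto simp: field_simps atMost_atLeast0 lessThan_Suc_atMost)
  also have "\<dots> \<le> 1 / (1 - q)" using assms by (intro divide_right_mono) auto
  finally show ?thesis .
qed

lemma summable_shift:
  fixes m :: "('n::finite \<Rightarrow> nat) \<Rightarrow> real"
  assumes "m summable_on UNIV"
  shows "(\<lambda>\<beta>. m (addm \<beta> \<gamma>)) summable_on UNIV"
proof -
  have "m summable_on range (\<lambda>\<beta>. addm \<beta> \<gamma>)"
    using summable_on_subset_banach[OF assms] by auto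
  moreover have "inj (\<lambda>\<beta>. addm \<beta> \<gamma>)" by (auto simp: inj_def addm_def fun_eq_iff)
  ultimately show ?thesis using summable_on_reindex[of "\<lambda>\<beta>. addm \<beta> \<gamma>" UNIV m] by (simp add: o_def)
qed

lemma ps_conv_dpar:
  assumes "ps_conv c e"
  shows "ps_conv (dpar j c) e"
  unfolding ps_conv_def
proof (intro allI impI)
  fix \<rho> :: real assume \<rho>: "0 \<le> \<rho>" "\<rho> < e"
  define \<rho>' where "\<rho>' = (\<rho> + e) / 2"
  define q where "q = \<rho> / \<rho>'"
  have \<rho>': "0 < \<rho>'" "\<rho>' < e" "\<rho> < \<rho>'" using \<rho> unfolding \<rho>'_def by auto
  have q: "0 \<le> q" "q < 1" using \<rho> \<rho>' unfolding q_def by auto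
  have s: "(\<lambda>\<alpha>. norm (c \<alpha>) * \<rho>' ^ mdeg \<alpha>) summable_on UNIV"
    using assms \<rho>' unfolding ps_conv_def by auto
  have s2: "(\<lambda>\<beta>. norm (c (addm \<beta> (eidx j))) * \<rho>' ^ mdeg (addm \<beta> (eidx j)) * (1 / (\<rho>' * (1 - q)))) summable_on UNIV"
    by (intro summable_on_cmult_left summable_shift[OF s, of "eidx j", simplified])
  show "(\<lambda>\<beta>. norm (dpar j c \<beta>) * \<rho> ^ mdeg \<beta>) summable_on UNIV"
  proof (rule summable_on_comparison_test[OF s2])
    fix \<beta> :: "'a \<Rightarrow> nat"
    have "real (\<beta> j + 1) * \<rho> ^ mdeg \<beta> \<le> real (mdeg \<beta> + 1) * \<rho> ^ mdeg \<beta>"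
      using mdeg_ge_comp[of \<beta> j] \<rho> by (intro mult_right_mono) auto
    also have "\<dots> = (real (mdeg \<beta> + 1) * q ^ mdeg \<beta>) * \<rho>' ^ mdeg \<beta>"
      using \<rho>' unfolding q_def by (simp add: power_divide)
    also have "\<dots> \<le> (1 / (1 - q)) * \<rho>' ^ mdeg \<beta>"
      using kq_bound[OF q] \<rho>' by (intro mult_right_mono) auto
    also have "\<dots> = \<rho>' ^ mdeg (addm \<beta> (eidx j)) * (1 / (\<rho>' * (1 - q)))"
      using \<rho>' q by (simp add: mdeg_addm mdeg_eidx field_simps)
    finally have "real (\<beta> j + 1) * \<rho> ^ mdeg \<beta> \<le> \<rho>' ^ mdeg (addm \<beta> (eidx j)) * (1 / (\<rho>' * (1 - q)))" .
    then have ineq: "norm (c (addm \<beta> (eidx j))) * (real (\<beta> j + 1) * \<rho> ^ mdeg \<beta>) \<le> norm (c (addm \<beta> (eidx j))) * (\<rho>' ^ mdeg (addm \<beta> (eidx j)) * (1 / (\<rho>' * (1 - q))))"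
      by (rule mult_left_mono) simp
    have eq: "norm (dpar j c \<beta>) * \<rho> ^ mdeg \<beta> = norm (c (addm \<beta> (eidx j))) * (real (\<beta> j + 1) * \<rho> ^ mdeg \<beta>)"
      unfolding dpar_def norm_mult
      by (simp only: norm_of_nat) (simp add: mult_ac)
    show "norm (dpar j c \<beta>) * \<rho> ^ mdeg \<beta> \<le> norm (c (addm \<beta> (eidx j))) * \<rho>' ^ mdeg (addm \<beta> (eidx j)) * (1 / (\<rho>' * (1 - q)))"
      using order_trans[OF eq[THEN eq_refl] ineq] by (simp only: mult.assoc)
  qed (use \<rho> in auto)
qed

lemma has_sum_dpar:
  assumes "ps_conv c e" "supn z < e"
  shows "((\<lambda>\<alpha>. c \<alpha> * (of_nat (\<alpha> j) * mpow z (decm j \<alpha>))) has_sum psum (dpar j c) z) UNIV"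
proof -
  let ?h = "\<lambda>\<beta>. addm \<beta> (eidx j)"
  let ?g = "\<lambda>\<alpha>. c \<alpha> * (of_nat (\<alpha> j) * mpow z (decm j \<alpha>))"
  have inj: "inj ?h" by (auto simp: inj_def addm_def fun_eq_iff)
  have "((\<lambda>\<beta>. dpar j c \<beta> * mpow z \<beta>) has_sum psum (dpar j c) z) UNIV"
    by (rule ps_has_sum[OF ps_conv_dpar[OF assms(1)] assms(2)])
  also have "(\<lambda>\<beta>. dpar j c \<beta> * mpow z \<beta>) = ?g \<circ> ?h"
    by (rule ext) (simp add: dpar_def)
  finally have "(?g has_sum psum (dpar j c) z) (range ?h)"
    using has_sum_reindex[OF inj] by blast
  moreover have "?g \<alpha> = 0" if "\<alpha> \<notin> range ?h" for \<alpha>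
  proof -
    have "\<alpha> j = 0" using that addm_decm[of \<alpha> j] by (metis rangeI)
    then show ?thesis by simp
  qed
  ultimately show ?thesis
    by (subst (asm) has_sum_cong_neutral[where T=UNIV and g="?g"]) auto
qed

lemma pd_ps_deriv:
  assumes "ps_conv c e" "supn z < e"
  shows "((\<lambda>t. psum c (upd z j t)) has_field_derivative psum (dpar j c) z) (at (z $ j))"
proof -
  define r where "r = (e - supn z) / 2"
  have r: "r > 0" using assms unfolding r_def by auto
  define \<rho> where "\<rho> = supn z + r"
  have \<rho>eq: "\<rho> = (supn z + e) / 2" unfolding \<rho>_def r_def by (simp add: field_simps)
  have \<rho>: "0 \<le> \<rho>" "\<rho> < e" using r assms(2) supn_nonneg[of z] unfolding \<rho>eq by simp_all
  have bnd: "supn (upd z j t) \<le> \<rho>" if "t \<in> cball (z $ j) r" for t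
    unfolding supn_le_iff
  proof
    fix k
    show "cmod (upd z j t $ k) \<le> \<rho>"
    proof (cases "k = j")
      case True
      have "cmod t \<le> cmod (z $ j) + cmod (t - z $ j)" by (metis add.commute diff_add_cancel norm_triangle_ineq)
      also have "\<dots> \<le> supn z + r"
      proof -
        have "cmod (t - z $ j) \<le> r" using that by (simp add: dist_norm norm_minus_commute)
        then show ?thesis using supn_ge[of z j] by linarith
      qed
      finally show ?thesis using True by (simp add: upd_component \<rho>_def)
    next
      case False then show ?thesis using supn_ge[of z k] r by (simp add: upd_component \<rho>_def)
    qed
  qed
  have ul: "uniform_limit (cball (z $ j) r) (\<lambda>X t. \<Sum>\<alpha>\<in>X. c \<alpha> * mpow (upd z j t) \<alpha>) (\<lambda>t. psum c (upd z j t)) (finite_subsets_at_top UNIV)"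
    by (rule ps_uniform[OF assms(1) \<rho>]) (use bnd in auto)
  have der: "((\<lambda>t. \<Sum>\<alpha>\<in>X. c \<alpha> * mpow (upd z j t) \<alpha>) has_field_derivative
              (\<Sum>\<alpha>\<in>X. c \<alpha> * (of_nat (\<alpha> j) * mpow (upd z j w) (decm j \<alpha>)))) (at w)" for X w
    by (intro DERIV_sum DERIV_cmult deriv_mpow_upd)
  obtain g' where g': "\<And>w. w \<in> ball (z $ j) r \<Longrightarrow> ((\<lambda>t. psum c (upd z j t)) has_field_derivative (g' w)) (at w) \<and>
       ((\<lambda>X. \<Sum>\<alpha>\<in>X. c \<alpha> * (of_nat (\<alpha> j) * mpow (upd z j w) (decm j \<alpha>))) \<longlongrightarrow> g' w) (finite_subsets_at_top UNIV)"
  proof (rule has_complex_derivative_uniform_limit[OF _ ul _ r])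
    show "\<forall>\<^sub>F X in finite_subsets_at_top UNIV.
       continuous_on (cball (z $ j) r) (\<lambda>t. \<Sum>\<alpha>\<in>X. c \<alpha> * mpow (upd z j t) \<alpha>) \<and>
       (\<forall>w\<in>ball (z $ j) r. ((\<lambda>t. \<Sum>\<alpha>\<in>X. c \<alpha> * mpow (upd z j t) \<alpha>) has_field_derivative
            (\<Sum>\<alpha>\<in>X. c \<alpha> * (of_nat (\<alpha> j) * mpow (upd z j w) (decm j \<alpha>)))) (at w))"
    proof (intro always_eventually allI conjI ballI)
      fix X w
      show "continuous_on (cball (z $ j) r) (\<lambda>t. \<Sum>\<alpha>\<in>X. c \<alpha> * mpow (upd z j t) \<alpha>)"
        by (rule continuous_at_imp_continuous_on, rule ballI, rule DERIV_isCont, rule der)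
      show "((\<lambda>t. \<Sum>\<alpha>\<in>X. c \<alpha> * mpow (upd z j t) \<alpha>) has_field_derivative
            (\<Sum>\<alpha>\<in>X. c \<alpha> * (of_nat (\<alpha> j) * mpow (upd z j w) (decm j \<alpha>)))) (at w)"
        by (rule der)
    qed
  qed auto
  have c: "z $ j \<in> ball (z $ j) r" using r by simp
  have A: "((\<lambda>X. \<Sum>\<alpha>\<in>X. c \<alpha> * (of_nat (\<alpha> j) * mpow z (decm j \<alpha>))) \<longlongrightarrow> psum (dpar j c) z) (finite_subsets_at_top UNIV)"
    using has_sum_dpar[OF assms, of j] unfolding has_sum_def .
  have B: "((\<lambda>X. \<Sum>\<alpha>\<in>X. c \<alpha> * (of_nat (\<alpha> j) * mpow z (decm j \<alpha>))) \<longlongrightarrow> g' (z $ j)) (finite_subsets_at_top UNIV)"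
    using g'[OF c] by simp
  have "g' (z $ j) = psum (dpar j c) z"
    by (rule tendsto_unique[OF _ B A]) simp
  then show ?thesis using g'[OF c] by simp
qed

lemma foldr_pd_ps:
  assumes "ps_conv c e" "\<And>z. supn z < e \<Longrightarrow> g z = psum c z"
  shows "ps_conv (foldr dpar L c) e \<and> (\<forall>z. supn z < e \<longrightarrow> foldr pd L g z = psum (foldr dpar L c) z)"
proof (induction L)
  case Nil
  then show ?case using assms by simp
next
  case (Cons j L)
  let ?c = "foldr dpar L c"
  let ?G = "foldr pd L g"
  have conv: "ps_conv ?c e" and eq: "\<And>z. supn z < e \<Longrightarrow> ?G z = psum ?c z" using Cons by auto
  have "foldr pd (j # L) g z = psum (foldr dpar (j # L) c) z" if z: "supn z < e" for z
  proof -
    have ev0: "eventually (\<lambda>t. t \<in> ball (z $ j) (e - cmod (z $ j))) (nhds (z $ j))"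
      by (rule eventually_nhds_in_open) (use supn_ge[of z j] z in auto)
    have ev: "eventually (\<lambda>t. ?G (upd z j t) = psum ?c (upd z j t)) (nhds (z $ j))"
    proof (rule eventually_mono[OF ev0], rule eq)
      fix t assume "t \<in> ball (z $ j) (e - cmod (z $ j))"
      then have d: "cmod (t - z $ j) < e - cmod (z $ j)" by (simp add: dist_norm norm_minus_commute)
      have "cmod t \<le> cmod (z $ j) + cmod (t - z $ j)"
        by (metis add.commute diff_add_cancel norm_triangle_ineq)
      then have "cmod t < e" using d by simp
      then show "supn (upd z j t) < e"
        unfolding supn_less_iff using supn_ge[of z] z by (auto simp: upd_component intro: le_less_trans)
    qed
    have "foldr pd (j # L) g z = deriv (\<lambda>t. ?G (upd z j t)) (z $ j)"
      by (simp add: pd_def upd_def)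
    also have "\<dots> = deriv (\<lambda>t. psum ?c (upd z j t)) (z $ j)"
      by (rule deriv_cong_ev[OF ev refl])
    also have "\<dots> = psum (dpar j ?c) z"
      by (rule DERIV_imp_deriv[OF pd_ps_deriv[OF conv z]])
    finally show ?thesis by simp
  qed
  then show ?case using ps_conv_dpar[OF conv, of j] by simp
qed


lemma prod_fact_addm_eidx:
  fixes \<beta> :: "'n::finite \<Rightarrow> nat"
  shows "(\<Prod>k\<in>UNIV. (fact (addm \<beta> (eidx j) k) :: complex)) = of_nat (\<beta> j + 1) * (\<Prod>k\<in>UNIV. fact (\<beta> k))"
proof -
  have "(\<Prod>k\<in>UNIV. (fact (addm \<beta> (eidx j) k) :: complex)) =
        (\<Prod>k\<in>UNIV. (if k = j then of_nat (\<beta> k + 1) else 1) * fact (\<beta> k))"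
    by (rule prod.cong[OF refl]) (simp add: addm_def eidx_def)
  also have "\<dots> = (\<Prod>k\<in>UNIV. (if k = j then of_nat (\<beta> k + 1) else 1)) * (\<Prod>k\<in>UNIV. (fact (\<beta> k) :: complex))"
    by (rule prod.distrib)
  also have "(\<Prod>k\<in>UNIV. (if k = j then of_nat (\<beta> k + 1) else 1 :: complex)) = of_nat (\<beta> j + 1)"
    by (subst prod.delta) auto
  finally show ?thesis .
qed

lemma foldr_dpar_formula:
  fixes \<beta> :: "'n::finite \<Rightarrow> nat"
  shows "(foldr dpar L c) \<beta> * (\<Prod>k\<in>UNIV. fact (\<beta> k)) =
     c (addm \<beta> (\<lambda>k. count_list L k)) * (\<Prod>k\<in>UNIV. (fact (\<beta> k + count_list L k) :: complex))"
proof (induction L arbitrary: \<beta>)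
  case Nil
  then show ?case by (simp add: addm_def)
next
  case (Cons j L)
  let ?X = "foldr dpar L c"
  have IH: "?X (addm \<beta> (eidx j)) * (\<Prod>k\<in>UNIV. fact (addm \<beta> (eidx j) k)) =
     c (addm (addm \<beta> (eidx j)) (\<lambda>k. count_list L k)) * (\<Prod>k\<in>UNIV. (fact (addm \<beta> (eidx j) k + count_list L k) :: complex))"
    by (rule Cons.IH)
  have a1: "addm (addm \<beta> (eidx j)) (\<lambda>k. count_list L k) = addm \<beta> (\<lambda>k. count_list (j # L) k)"
    by (auto simp: addm_def eidx_def fun_eq_iff)
  have a2: "addm \<beta> (eidx j) k + count_list L k = \<beta> k + count_list (j # L) k" for k
    by (auto simp: addm_def eidx_def)
  have "foldr dpar (j # L) c \<beta> * (\<Prod>k\<in>UNIV. fact (\<beta> k)) =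
        ?X (addm \<beta> (eidx j)) * (of_nat (\<beta> j + 1) * (\<Prod>k\<in>UNIV. fact (\<beta> k)))"
    by (simp add: dpar_def mult_ac)
  also have "\<dots> = ?X (addm \<beta> (eidx j)) * (\<Prod>k\<in>UNIV. fact (addm \<beta> (eidx j) k))"
    by (simp only: prod_fact_addm_eidx)
  also have "\<dots> = c (addm \<beta> (\<lambda>k. count_list (j # L) k)) * (\<Prod>k\<in>UNIV. (fact (\<beta> k + count_list (j # L) k) :: complex))"
    unfolding IH a1 a2 ..
  finally show ?case .
qed

lemma ex_list_count: "\<exists>L. \<forall>j. count_list L j = (\<alpha>::'n::finite \<Rightarrow> nat) j"
proof -
  obtain xs :: "'n list" where xs: "distinct xs" "set xs = UNIV"
    using finite_distinct_list[of "UNIV :: 'n set"] by auto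
  have "distinct ys \<Longrightarrow> count_list (concat (map (\<lambda>j. replicate (\<alpha> j) j) ys)) k = (if k \<in> set ys then \<alpha> k else 0)"
    for ys :: "'n list" and k
  proof (induction ys)
    case Nil then show ?case by simp
  next
    case (Cons y ys)
    have "count_list (replicate n y) k = (if y = k then n else 0)" for n
      by (induction n) auto
    then show ?case using Cons by auto
  qed
  then show ?thesis using xs by (intro exI[of _ "concat (map (\<lambda>j. replicate (\<alpha> j) j) xs)"]) auto
qed

lemma psum_zero: "psum c 0 = c (\<lambda>_. 0)"
proof -
  have "((\<lambda>\<alpha>. c \<alpha> * mpow 0 \<alpha>) has_sum (\<Sum>\<alpha>\<in>{\<lambda>_. 0}. c \<alpha> * mpow 0 \<alpha>)) {\<lambda>_. 0}"
    by (rule has_sum_finite) simp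
  then have "((\<lambda>\<alpha>. c \<alpha> * mpow 0 \<alpha>) has_sum c (\<lambda>_. 0)) UNIV"
    by (subst (asm) has_sum_cong_neutral[where T=UNIV and g="\<lambda>\<alpha>. c \<alpha> * mpow 0 \<alpha>"])
       (auto simp: mpow_zero)
  then show ?thesis unfolding psum_def by (rule infsumI)
qed

lemma pdiff_ps:
  assumes "ps_conv c e" "0 < e" "\<And>z. supn z < e \<Longrightarrow> g z = psum c z"
  shows "pdiff \<alpha> g 0 = c \<alpha> * of_real (mfact \<alpha>)"
proof -
  define L where "L = (SOME L. \<forall>j. count_list L j = \<alpha> j)"
  have L: "\<forall>j. count_list L j = \<alpha> j"
    unfolding L_def using someI_ex[OF ex_list_count[of \<alpha>]] .
  have "pdiff \<alpha> g 0 = foldr pd L g 0" unfolding pdiff_def L_def ..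
  also have "\<dots> = psum (foldr dpar L c) 0"
    using foldr_pd_ps[OF assms(1,3), of L] assms(2) by simp
  also have "\<dots> = foldr dpar L c (\<lambda>_. 0)" by (rule psum_zero)
  also have "\<dots> = c \<alpha> * (\<Prod>k\<in>UNIV. (fact (\<alpha> k) :: complex))"
    using foldr_dpar_formula[of L c "\<lambda>_. 0"] L by (simp add: addm_def)
  also have "(\<Prod>k\<in>UNIV. (fact (\<alpha> k) :: complex)) = of_real (mfact \<alpha>)"
    unfolding mfact_def by (simp add: of_real_prod)
  finally show ?thesis .
qed

lemma analytic_vec_comp:
  fixes F :: "complex^'n::finite \<Rightarrow> complex^'m::finite"
  assumes "analytic_vec S F" "w \<in> S"
  obtains e and c :: "'m \<Rightarrow> ('n \<Rightarrow> nat) \<Rightarrow> complex" where "e > 0" "\<And>i. ps_conv (c i) e"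
    "\<And>i z. supn (z - w) < e \<Longrightarrow> F z $ i = psum (c i) (z - w)"
proof -
  obtain e cv where e: "e > 0" and cv: "\<And>z. supn (z - w) < e \<Longrightarrow>
      ((\<lambda>\<alpha>. \<chi> i. mpow (z - w) \<alpha> * cv \<alpha> $ i) has_sum F z) UNIV"
    using assms unfolding analytic_vec_def by blast
  define c where "c i \<alpha> = cv \<alpha> $ i" for i \<alpha>
  have hs: "((\<lambda>\<alpha>. c i \<alpha> * mpow (z - w) \<alpha>) has_sum F z $ i) UNIV" if "supn (z - w) < e" for i z
    using has_sum_bounded_linear[OF bounded_linear_vec_nth[of i] cv[OF that]]
    by (simp add: c_def mult.commute)
  have conv: "ps_conv (c i) e" for i
    unfolding ps_conv_def
  proof (intro allI impI)
    fix \<rho> :: real assume \<rho>: "0 \<le> \<rho>" "\<rho> < e"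
    define z where "z = w + (\<chi> k. complex_of_real \<rho>)"
    have zw: "z - w = (\<chi> k. complex_of_real \<rho>)" unfolding z_def by simp
    have "supn (z - w) < e" unfolding zw supn_const using \<rho> by simp
    from hs[OF this, of i] have "(\<lambda>\<alpha>. c i \<alpha> * mpow (z - w) \<alpha>) summable_on UNIV"
      using has_sum_imp_summable by blast
    then have "(\<lambda>\<alpha>. norm (c i \<alpha> * mpow (z - w) \<alpha>)) summable_on UNIV"
      using summable_on_iff_abs_summable_on_complex[of "\<lambda>\<alpha>. c i \<alpha> * mpow (z - w) \<alpha>" UNIV] by simp
    moreover have "norm (c i \<alpha> * mpow (z - w) \<alpha>) = norm (c i \<alpha>) * \<rho> ^ mdeg \<alpha>" for \<alpha>
      unfolding zw mpow_const norm_mult norm_power using \<rho> by simp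
    ultimately show "(\<lambda>\<alpha>. norm (c i \<alpha>) * \<rho> ^ mdeg \<alpha>) summable_on UNIV" by simp
  qed
  show ?thesis
  proof (rule that[OF e conv])
    fix i z assume "supn (z - w) < e"
    from hs[OF this, of i] show "F z $ i = psum (c i) (z - w)"
      unfolding psum_def by (simp add: infsumI)
  qed
qed


lemma polydisc1_iff: "z \<in> polydisc1 \<longleftrightarrow> supn z < 1"
  unfolding polydisc1_def supn_less_iff by simp

definition degset :: "nat \<Rightarrow> ('n::finite \<Rightarrow> nat) set" where
  "degset k = {\<alpha>. mdeg \<alpha> = k}"

lemma finite_degset: "finite (degset k)"
  unfolding degset_def by (rule finite_subset[OF _ finite_mdeg_le[of k]]) auto

lemma group_deg:
  fixes f :: "('n::finite \<Rightarrow> nat) \<Rightarrow> complex"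
  assumes "(f has_sum S) UNIV"
  shows "(\<lambda>k. \<Sum>\<alpha>\<in>degset k. f \<alpha>) sums S"
proof -
  let ?h = "\<lambda>\<alpha>::'n\<Rightarrow>nat. (mdeg \<alpha>, \<alpha>)"
  have inj: "inj ?h" by (auto simp: inj_def)
  have img: "range ?h = Sigma UNIV degset" by (auto simp: degset_def)
  have "((\<lambda>(k, \<alpha>). f \<alpha>) \<circ> ?h) = f" by auto
  with assms have "((\<lambda>(k, \<alpha>). f \<alpha>) has_sum S) (range ?h)"
    using has_sum_reindex[OF inj, of "\<lambda>(k, \<alpha>). f \<alpha>" S] by simp
  then have "((\<lambda>(k, \<alpha>). f \<alpha>) has_sum S) (Sigma UNIV degset)" by (simp only: img)
  then have "((\<lambda>k. \<Sum>\<alpha>\<in>degset k. f \<alpha>) has_sum S) UNIV"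
    by (rule has_sum_Sigma') (simp add: finite_degset)
  then show ?thesis by (rule has_sum_imp_sums)
qed

lemma sum_root:
  fixes d :: int and m :: nat
  assumes "0 < m" "\<bar>d\<bar> < int m"
  shows "(\<Sum>l<m. exp (2 * of_real pi * \<i> * of_int d * of_nat l / of_nat m)) = (if d = 0 then of_nat m else 0)"
proof (cases "d = 0")
  case True then show ?thesis by simp
next
  case False
  define z where "z = exp (2 * of_real pi * \<i> * of_int d / of_nat m)"
  have zl: "exp (2 * of_real pi * \<i> * of_int d * of_nat l / of_nat m) = z ^ l" for l
    unfolding z_def exp_of_nat_mult[symmetric] by (simp add: mult_ac)
  have zm: "z ^ m = 1"
  proof -
    have "z ^ m = exp (of_int d * (2 * of_real pi * \<i>))"
      unfolding z_def exp_of_nat_mult[symmetric] using assms(1) by (simp add: field_simps)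
    also have "\<dots> = 1" unfolding exp_eq_1 by (auto intro!: exI[of _ d])
    finally show ?thesis .
  qed
  have z1: "z \<noteq> 1"
  proof
    assume "z = 1"
    then obtain n :: int where n: "Im (2 * of_real pi * \<i> * of_int d / of_nat m) = of_int (2 * n) * pi"
      unfolding z_def exp_eq_1 by blast
    then have "2 * pi * d / m = 2 * n * pi" by simp
    then have "real_of_int d = real_of_int n * real m" using assms(1) pi_gt_zero
      by (simp add: field_simps)
    then have "d = n * int m" by (metis of_int_eq_iff of_int_mult of_int_of_nat_eq)
    with False assms(2) show False
      by (cases "n = 0") (auto simp: abs_mult dest: mult_strict_right_mono)
  qed
  have "(\<Sum>l<m. exp (2 * of_real pi * \<i> * of_int d * of_nat l / of_nat m)) = (\<Sum>l<m. z ^ l)"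
    by (simp only: zl)
  also have "\<dots> = 0" using zm z1 by (simp add: sum_gp_strict)
  finally show ?thesis using False by simp
qed


lemma norm_le_card_supn: "norm (z::complex^'n::finite) \<le> real CARD('n) * supn z"
proof -
  have "norm z = L2_set (\<lambda>i. norm (z $ i)) UNIV" by (simp add: norm_vec_def)
  also have "\<dots> \<le> (\<Sum>i\<in>UNIV. norm (z $ i))" by (rule L2_set_le_sum) simp
  also have "\<dots> \<le> (\<Sum>i\<in>(UNIV::'n set). supn z)" by (intro sum_mono supn_ge)
  finally show ?thesis by simp
qed

lemma compact_supn_le: "compact {z::complex^'n::finite. supn z \<le> R}"
proof (subst compact_eq_bounded_closed, intro conjI)
  show "bounded {z::complex^'n. supn z \<le> R}"
    unfolding bounded_iff
  proof (intro exI ballI)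
    fix z :: "complex^'n" assume "z \<in> {z. supn z \<le> R}"
    then have "real CARD('n) * supn z \<le> real CARD('n) * R" by (intro mult_left_mono) auto
    then show "norm z \<le> real CARD('n) * R"
      using norm_le_card_supn[of z] by linarith
  qed
  show "closed {z::complex^'n. supn z \<le> R}"
    by (rule closed_Collect_le[OF continuous_on_supn continuous_on_const])
qed

definition Pk :: "(('n::finite \<Rightarrow> nat) \<Rightarrow> complex) \<Rightarrow> complex^'n \<Rightarrow> nat \<Rightarrow> complex" where
  "Pk c w k = (\<Sum>\<alpha>\<in>degset k. c \<alpha> * mpow w \<alpha>)"

context
  fixes F :: "complex^'n::finite \<Rightarrow> complex^'n"
  assumes Fan: "analytic_vec polydisc1 F"
begin

lemma F_comp_cont: "continuous_on polydisc1 (\<lambda>z. F z $ i)"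
proof (rule continuous_at_imp_continuous_on, rule ballI)
  fix p :: "complex^'n" assume p: "p \<in> polydisc1"
  obtain e and c :: "'n \<Rightarrow> ('n \<Rightarrow> nat) \<Rightarrow> complex" where e: "e > 0" and conv: "\<And>i. ps_conv (c i) e"
    and eq: "\<And>i z. supn (z - p) < e \<Longrightarrow> F z $ i = psum (c i) (z - p)"
    using analytic_vec_comp[OF Fan p] by blast
  have "isCont (psum (c i)) ((\<lambda>z. z - p) p)" using ps_continuous[OF conv] e by simp
  then have c1: "isCont ((psum (c i)) \<circ> (\<lambda>z. z - p)) p"
    by (intro continuous_at_compose continuous_intros)
  have ev0: "eventually (\<lambda>z. z \<in> ball p e) (nhds p)"
    by (rule eventually_nhds_in_open) (use e in auto)
  have ev: "eventually (\<lambda>z. F z $ i = ((psum (c i)) \<circ> (\<lambda>z. z - p)) z) (nhds p)"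
  proof (rule eventually_mono[OF ev0])
    fix z assume "z \<in> ball p e"
    then have "supn (z - p) < e" using supn_le_norm[of "z - p"] by (simp add: dist_norm norm_minus_commute)
    then show "F z $ i = ((psum (c i)) \<circ> (\<lambda>z. z - p)) z" using eq by simp
  qed
  show "isCont (\<lambda>z. F z $ i) p" using isCont_cong[OF ev] c1 by (simp add: o_def)
qed

lemma F_cont: "continuous_on polydisc1 F"
proof -
  have "continuous_on polydisc1 (\<lambda>z. \<chi> i. F z $ i)"
    by (intro continuous_on_vec_lambda F_comp_cont)
  then show ?thesis by simp
qed

lemma F_bound:
  assumes "R < 1"
  obtains M where "M \<ge> 0" "\<And>z i. supn z \<le> R \<Longrightarrow> cmod (F z $ i) \<le> M"
proof -
  have "continuous_on {z. supn z \<le> R} F"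
    by (rule continuous_on_subset[OF F_cont]) (use assms in \<open>auto simp: polydisc1_iff\<close>)
  then obtain B where B: "B \<ge> 0" "\<And>z. z \<in> {z. supn z \<le> R} \<Longrightarrow> norm (F z) \<le> B"
    using continuous_on_compact_bound[OF compact_supn_le] by blast
  show ?thesis
  proof (rule that[OF B(1)])
    fix z :: "complex^'n" and i assume "supn z \<le> R"
    then show "cmod (F z $ i) \<le> B"
      using B(2)[of z] Finite_Cartesian_Product.norm_nth_le[of "F z" i] by simp
  qed
qed

lemma F_line_holo: "(\<lambda>t. F (t *s w) $ i) holomorphic_on {t. cmod t * supn w < 1}"
  unfolding holomorphic_on_def
proof
  fix t0 assume t0: "t0 \<in> {t. cmod t * supn w < 1}"
  define p where "p = t0 *s w"
  have p: "p \<in> polydisc1" using t0 unfolding polydisc1_iff p_def supn_scale by simp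
  obtain e and c :: "'n \<Rightarrow> ('n \<Rightarrow> nat) \<Rightarrow> complex" where e: "e > 0" and conv: "\<And>i. ps_conv (c i) e"
    and eq: "\<And>i z. supn (z - p) < e \<Longrightarrow> F z $ i = psum (c i) (z - p)"
    using analytic_vec_comp[OF Fan p] by blast
  define \<delta> where "\<delta> = e / (supn w + 1)"
  have \<delta>: "\<delta> > 0" using e supn_nonneg[of w] unfolding \<delta>_def by simp
  have diff: "t *s w - p = (t - t0) *s w" for t unfolding p_def by (simp add: vec_eq_iff algebra_simps)
  have inU: "supn (-p + t *s w) < e" if "t \<in> ball t0 \<delta>" for t
  proof -
    have "supn (-p + t *s w) = cmod (t - t0) * supn w"
      using diff[of t] supn_scale[of "t - t0" w] by (simp add: algebra_simps)
    also have "\<dots> \<le> \<delta> * supn w"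
      using that supn_nonneg[of w] by (intro mult_right_mono) (auto simp: dist_norm norm_minus_commute)
    also have "\<delta> * supn w < e"
      unfolding \<delta>_def using e supn_nonneg[of w] by (simp add: field_simps)
    finally show ?thesis .
  qed
  have "(\<lambda>t. psum (c i) (-p + t *s w)) holomorphic_on {t. supn (-p + t *s w) < e}"
    by (rule ps_holo_line[OF conv])
  then have "(\<lambda>t. psum (c i) (-p + t *s w)) holomorphic_on ball t0 \<delta>"
    by (rule holomorphic_on_subset) (use inU in auto)
  then have "(\<lambda>t. psum (c i) (-p + t *s w)) field_differentiable at t0"
    using \<delta> by (intro holomorphic_on_imp_differentiable_at[of _ "ball t0 \<delta>"]) auto
  then obtain D where D: "((\<lambda>t. psum (c i) (-p + t *s w)) has_field_derivative D) (at t0)"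
    unfolding field_differentiable_def by blast
  have "((\<lambda>t. F (t *s w) $ i) has_field_derivative D) (at t0)"
  proof (rule has_field_derivative_transform_within_open[OF D, of "ball t0 \<delta>"])
    fix t assume t: "t \<in> ball t0 \<delta>"
    have "supn (t *s w - p) < e" using inU[OF t] by (simp add: algebra_simps)
    then show "psum (c i) (-p + t *s w) = F (t *s w) $ i" using eq by (simp add: algebra_simps)
  qed (use \<delta> in auto)
  then show "(\<lambda>t. F (t *s w) $ i) field_differentiable at t0 within {t. cmod t * supn w < 1}"
    using field_differentiable_at_within field_differentiable_def by blast
qed

context
  fixes e0 :: real and c0 :: "'n \<Rightarrow> ('n \<Rightarrow> nat) \<Rightarrow> complex"
  assumes e0: "e0 > 0" and c0conv: "\<And>i. ps_conv (c0 i) e0"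
    and c0eq: "\<And>i z. supn z < e0 \<Longrightarrow> F z $ i = psum (c0 i) z"
begin

lemma line_sums:
  assumes "cmod t * supn w < e0"
  shows "(\<lambda>k. Pk (c0 i) w k * t ^ k) sums (F (t *s w) $ i)"
proof -
  have s: "supn (t *s w) < e0" using assms by (simp add: supn_scale)
  have "(\<lambda>k. \<Sum>\<alpha>\<in>degset k. c0 i \<alpha> * mpow (t *s w) \<alpha>) sums psum (c0 i) (t *s w)"
    by (rule group_deg[OF ps_has_sum[OF c0conv s]])
  moreover have "(\<Sum>\<alpha>\<in>degset k. c0 i \<alpha> * mpow (t *s w) \<alpha>) = Pk (c0 i) w k * t ^ k" for k
    unfolding Pk_def sum_distrib_right
    by (rule sum.cong[OF refl]) (simp add: mpow_scale degset_def mult_ac)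
  ultimately show ?thesis using c0eq[OF s] by simp
qed

lemma line_fps: "(\<lambda>t. F (t *s w) $ i) has_fps_expansion Abs_fps (Pk (c0 i) w)"
  unfolding has_fps_expansion_def
proof
  define \<delta> where "\<delta> = e0 / (supn w + 1)"
  have \<delta>: "\<delta> > 0" using e0 supn_nonneg[of w] unfolding \<delta>_def by simp
  have small: "cmod t * supn w < e0" if "cmod t < \<delta>" for t
  proof -
    have "cmod t * supn w \<le> \<delta> * supn w" using that supn_nonneg[of w] by (intro mult_right_mono) auto
    also have "\<delta> * supn w < e0" unfolding \<delta>_def using e0 supn_nonneg[of w] by (simp add: field_simps)
    finally show ?thesis .
  qed
  have "cmod (complex_of_real (\<delta>/2)) < \<delta>" using \<delta> by simp
  from line_sums[OF small[OF this]] have "summable (\<lambda>k. Pk (c0 i) w k * complex_of_real (\<delta>/2) ^ k)"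
    by (rule sums_summable)
  then have "conv_radius (Pk (c0 i) w) \<ge> norm (complex_of_real (\<delta>/2))" by (rule conv_radius_geI)
  then show "0 < fps_conv_radius (Abs_fps (Pk (c0 i) w))"
    unfolding fps_conv_radius_def using \<delta> by (auto simp: less_le_trans[of 0 "ereal (\<delta>/2)"])
  have ev0: "eventually (\<lambda>t. t \<in> ball 0 \<delta>) (nhds (0::complex))"
    by (rule eventually_nhds_in_open) (use \<delta> in auto)
  show "\<forall>\<^sub>F t in nhds 0. eval_fps (Abs_fps (Pk (c0 i) w)) t = F (t *s w) $ i"
  proof (rule eventually_mono[OF ev0])
    fix t :: complex assume "t \<in> ball 0 \<delta>"
    then have "cmod t < \<delta>" by simp
    from line_sums[OF small[OF this]] show "eval_fps (Abs_fps (Pk (c0 i) w)) t = F (t *s w) $ i"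
      unfolding eval_fps_def by (simp add: sums_iff)
  qed
qed

lemma Pk_deriv: "Pk (c0 i) w k = (deriv ^^ k) (\<lambda>t. F (t *s w) $ i) 0 / fact k"
  using fps_nth_fps_expansion[OF line_fps[of w i], of k] by simp

lemma Pk_bound:
  assumes "0 < \<rho>" "\<rho> < R" "R < 1" "\<And>z. supn z \<le> R \<Longrightarrow> cmod (F z $ i) \<le> M" "supn w = \<rho>"
  shows "cmod (Pk (c0 i) w k) \<le> M * (\<rho> / R) ^ k"
proof -
  let ?\<phi> = "\<lambda>t. F (t *s w) $ i"
  have hol: "?\<phi> holomorphic_on {t. cmod t * supn w < 1}" by (rule F_line_holo)
  have R\<rho>: "R / \<rho> > 0" using assms by simp
  have sub: "cball 0 (R / \<rho>) \<subseteq> {t. cmod t * supn w < 1}"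
  proof
    fix t :: complex assume "t \<in> cball 0 (R / \<rho>)"
    then have "cmod t \<le> R / \<rho>" by simp
    then have "cmod t * \<rho> \<le> R" using assms by (simp add: field_simps)
    then show "t \<in> {t. cmod t * supn w < 1}" using assms by simp
  qed
  have "norm ((deriv ^^ k) ?\<phi> 0) \<le> fact k * M / (R / \<rho>) ^ k"
  proof (rule Cauchy_inequality)
    show "?\<phi> holomorphic_on ball 0 (R / \<rho>)"
      using holomorphic_on_subset[OF hol] sub ball_subset_cball by blast
    show "continuous_on (cball 0 (R / \<rho>)) ?\<phi>"
      using continuous_on_subset[OF holomorphic_on_imp_continuous_on[OF hol] sub] .
    show "0 < R / \<rho>" by (rule R\<rho>)
    fix x :: complex assume "norm (0 - x) = R / \<rho>"
    then have "supn (x *s w) = R" using assms by (simp add: supn_scale)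
    then show "norm (?\<phi> x) \<le> M" using assms(4) by simp
  qed
  then have "cmod (Pk (c0 i) w k) \<le> (fact k * M / (R / \<rho>) ^ k) / fact k"
    unfolding Pk_deriv norm_divide norm_fact by (intro divide_right_mono) auto
  also have "\<dots> = M * (\<rho> / R) ^ k" by (simp add: power_divide field_simps)
  finally show ?thesis .
qed

end

end


context
  fixes F :: "complex^'n::finite \<Rightarrow> complex^'n"
  assumes Fan: "analytic_vec polydisc1 F"
  fixes e0 :: real and c0 :: "'n \<Rightarrow> ('n \<Rightarrow> nat) \<Rightarrow> complex"
  assumes e0: "e0 > 0" and c0conv: "\<And>i. ps_conv (c0 i) e0"
    and c0eq: "\<And>i z. supn z < e0 \<Longrightarrow> F z $ i = psum (c0 i) z"
begin

lemma coeff_bound: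
  assumes R: "0 < R" "R < 1" and M: "\<And>z. supn z \<le> R \<Longrightarrow> cmod (F z $ i) \<le> M"
  shows "cmod (c0 i \<alpha>) \<le> M / R ^ mdeg \<alpha>"
proof -
  define k where "k = mdeg \<alpha>"
  define m where "m = k + 1"
  define \<rho> where "\<rho> = R / 2"
  define ee where "ee x = exp (2 * of_real pi * \<i> * x / of_nat m)" for x :: complex
  define G where "G = PiE (UNIV::'n set) (\<lambda>_. {..<m})"
  define w where "w l = (\<chi> j. of_real \<rho> * ee (of_nat (l j)))" for l :: "'n \<Rightarrow> nat"
  define E where "E l = (\<Prod>j\<in>UNIV. ee (- of_nat (\<alpha> j) * of_nat (l j)))" for l :: "'n \<Rightarrow> nat"
  have m: "m > 0" unfolding m_def by simp
  have \<rho>: "0 < \<rho>" "\<rho> < R" using R unfolding \<rho>_def by auto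
  have ee_add: "ee a * ee b = ee (a + b)" for a b
    unfolding ee_def by (simp add: exp_add[symmetric] add_divide_distrib ring_distribs)
  have ee_pow: "ee a ^ n = ee (of_nat n * a)" for a n
    unfolding ee_def exp_of_nat_mult[symmetric] by (simp add: mult_ac)
  have norm_ee: "cmod (ee (of_real r)) = 1" for r
    unfolding ee_def by (simp add: norm_exp_eq_Re)
  have norm_ee_nat: "cmod (ee (of_nat a)) = 1" for a
    using norm_ee[of "real a"] by simp
  have norm_E: "cmod (E l) = 1" for l
  proof -
    have "cmod (E l) = (\<Prod>j\<in>UNIV. cmod (ee (of_real (- real (\<alpha> j) * real (l j)))))"
      unfolding E_def prod_norm[symmetric] by simp
    also have "\<dots> = 1" by (simp only: norm_ee) simp
    finally show ?thesis .
  qed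
  have supn_w: "supn (w l) = \<rho>" for l
  proof -
    have c: "cmod (w l $ j) = \<rho>" for j
      unfolding w_def using \<rho> by (simp add: norm_mult norm_ee_nat)
    obtain j where "supn (w l) = cmod (w l $ j)" by (rule supn_attained)
    then show ?thesis using c by simp
  qed
  have Pk_w: "cmod (Pk (c0 i) (w l) k) \<le> M * (\<rho> / R) ^ k" for l
    by (rule Pk_bound[OF Fan e0 c0conv c0eq \<rho> R(2) M supn_w])
  have mpow_w: "mpow (w l) \<beta> = of_real \<rho> ^ mdeg \<beta> * (\<Prod>j\<in>UNIV. ee (of_nat (\<beta> j) * of_nat (l j)))" for l \<beta>
  proof -
    have "mpow (w l) \<beta> = (\<Prod>j\<in>UNIV. of_real \<rho> ^ \<beta> j * ee (of_nat (\<beta> j) * of_nat (l j)))"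
      unfolding mpow_def w_def by (simp add: power_mult_distrib ee_pow)
    also have "\<dots> = of_real \<rho> ^ mdeg \<beta> * (\<Prod>j\<in>UNIV. ee (of_nat (\<beta> j) * of_nat (l j)))"
      unfolding prod.distrib mdeg_def by (simp add: power_sum)
    finally show ?thesis .
  qed
  define d where "d \<beta> j = int (\<beta> j) - int (\<alpha> j)" for \<beta> :: "'n \<Rightarrow> nat" and j
  have key: "E l * mpow (w l) \<beta> = of_real \<rho> ^ mdeg \<beta> * (\<Prod>j\<in>UNIV. ee (of_int (d \<beta> j) * of_nat (l j)))" for l \<beta>
  proof -
    have "E l * (\<Prod>j\<in>UNIV. ee (of_nat (\<beta> j) * of_nat (l j))) =
          (\<Prod>j\<in>UNIV. ee (- of_nat (\<alpha> j) * of_nat (l j)) * ee (of_nat (\<beta> j) * of_nat (l j)))"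
      unfolding E_def prod.distrib ..
    also have "\<dots> = (\<Prod>j\<in>UNIV. ee (of_int (d \<beta> j) * of_nat (l j)))"
      by (rule prod.cong[OF refl]) (simp add: ee_add d_def algebra_simps)
    finally show ?thesis unfolding mpow_w by (simp add: mult_ac)
  qed
  have sum1: "(\<Sum>l<m. ee (of_int dd * of_nat l)) = (if dd = 0 then of_nat m else 0)" if "\<bar>dd\<bar> < int m" for dd
  proof -
    have "ee (of_int dd * of_nat l) = exp (2 * of_real pi * \<i> * of_int dd * of_nat l / of_nat m)" for l
      unfolding ee_def by (simp add: mult.assoc)
    then show ?thesis using sum_root[OF m that] by simp
  qed
  have orth: "(\<Sum>l\<in>G. \<Prod>j\<in>UNIV. ee (of_int (d \<beta> j) * of_nat (l j))) = (if \<beta> = \<alpha> then of_nat m ^ CARD('n) else 0)"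
    if \<beta>: "\<beta> \<in> degset k" for \<beta>
  proof -
    have dm: "\<bar>d \<beta> j\<bar> < int m" for j
    proof -
      have "\<beta> j \<le> k" using \<beta> mdeg_ge_comp[of \<beta> j] unfolding degset_def by simp
      moreover have "\<alpha> j \<le> k" using mdeg_ge_comp[of \<alpha> j] unfolding k_def by simp
      ultimately show ?thesis unfolding d_def m_def by linarith
    qed
    have "(\<Sum>l\<in>G. \<Prod>j\<in>UNIV. ee (of_int (d \<beta> j) * of_nat (l j))) = (\<Prod>j\<in>UNIV. \<Sum>l<m. ee (of_int (d \<beta> j) * of_nat l))"
      unfolding G_def by (rule prod_sum_PiE[symmetric]) auto
    also have "\<dots> = (\<Prod>j\<in>UNIV. if d \<beta> j = 0 then of_nat m else 0)"
      using sum1[OF dm] by simp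
    also have "\<dots> = (if \<beta> = \<alpha> then of_nat m ^ CARD('n) else 0)"
    proof (cases "\<beta> = \<alpha>")
      case True then show ?thesis by (simp add: d_def)
    next
      case False
      then obtain j where "\<beta> j \<noteq> \<alpha> j" by auto
      then have "d \<beta> j \<noteq> 0" unfolding d_def by simp
      then have "(\<Prod>j\<in>UNIV. if d \<beta> j = 0 then (of_nat m::complex) else 0) = 0"
        by (intro prod_zero) auto
      then show ?thesis using False by simp
    qed
    finally show ?thesis .
  qed
  define S where "S = (\<Sum>l\<in>G. E l * Pk (c0 i) (w l) k)"
  have "S = (\<Sum>l\<in>G. \<Sum>\<beta>\<in>degset k. c0 i \<beta> * (E l * mpow (w l) \<beta>))"
    unfolding S_def Pk_def sum_distrib_left by (simp add: mult_ac)
  also have "\<dots> = (\<Sum>\<beta>\<in>degset k. \<Sum>l\<in>G. c0 i \<beta> * (E l * mpow (w l) \<beta>))"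
    by (rule sum.swap)
  also have "\<dots> = (\<Sum>\<beta>\<in>degset k. c0 i \<beta> * of_real \<rho> ^ k * (\<Sum>l\<in>G. \<Prod>j\<in>UNIV. ee (of_int (d \<beta> j) * of_nat (l j))))"
    by (rule sum.cong[OF refl]) (simp add: key sum_distrib_left degset_def mult_ac)
  also have "\<dots> = (\<Sum>\<beta>\<in>degset k. if \<beta> = \<alpha> then c0 i \<beta> * of_real \<rho> ^ k * of_nat m ^ CARD('n) else 0)"
    by (rule sum.cong[OF refl]) (simp add: orth)
  also have "\<dots> = c0 i \<alpha> * of_real \<rho> ^ k * of_nat m ^ CARD('n)"
    by (subst sum.delta[OF finite_degset]) (simp add: degset_def k_def)
  finally have S: "S = c0 i \<alpha> * of_real \<rho> ^ k * of_nat m ^ CARD('n)" .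
  have "cmod S \<le> (\<Sum>l\<in>G. cmod (E l * Pk (c0 i) (w l) k))"
    unfolding S_def by (rule norm_sum)
  also have "\<dots> \<le> (\<Sum>l\<in>G. M * (\<rho> / R) ^ k)"
    by (rule sum_mono) (simp add: norm_mult norm_E Pk_w)
  also have "\<dots> = real m ^ CARD('n) * (M * (\<rho> / R) ^ k)"
    unfolding G_def by (simp add: card_PiE)
  finally have "cmod (c0 i \<alpha>) * \<rho> ^ k * real m ^ CARD('n) \<le> real m ^ CARD('n) * (M * (\<rho> / R) ^ k)"
    unfolding S using \<rho> by (simp add: norm_mult norm_power)
  then have "cmod (c0 i \<alpha>) * \<rho> ^ k \<le> M * (\<rho> / R) ^ k"
    using m by (simp add: mult_ac)
  then have "cmod (c0 i \<alpha>) * \<rho> ^ k \<le> (M / R ^ k) * \<rho> ^ k"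
    by (simp add: power_divide)
  then have "cmod (c0 i \<alpha>) \<le> M / R ^ k"
    by (rule mult_right_le_imp_le) (use \<rho> in simp)
  then show ?thesis unfolding k_def .
qed

end


context
  fixes F :: "complex^'n::finite \<Rightarrow> complex^'n"
  assumes Fan: "analytic_vec polydisc1 F"
  fixes e0 :: real and c0 :: "'n \<Rightarrow> ('n \<Rightarrow> nat) \<Rightarrow> complex"
  assumes e0: "e0 > 0" and c0conv: "\<And>i. ps_conv (c0 i) e0"
    and c0eq: "\<And>i z. supn z < e0 \<Longrightarrow> F z $ i = psum (c0 i) z"
begin

lemma c0_conv1: "ps_conv (c0 i) 1"
  unfolding ps_conv_def
proof (intro allI impI)
  fix \<rho> :: real assume \<rho>: "0 \<le> \<rho>" "\<rho> < 1"
  define R where "R = (\<rho> + 1) / 2"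
  have R: "0 < R" "R < 1" "\<rho> < R" using \<rho> unfolding R_def by auto
  obtain M where M: "M \<ge> 0" "\<And>z i. supn z \<le> R \<Longrightarrow> cmod (F z $ i) \<le> M"
    using F_bound[OF Fan R(2)] by blast
  define q where "q = \<rho> / R"
  have q: "0 \<le> q" "q < 1" using \<rho> R unfolding q_def by auto
  have s: "(\<lambda>\<alpha>::'n\<Rightarrow>nat. M * q ^ mdeg \<alpha>) summable_on UNIV"
    by (rule summable_on_cmult_right[OF geom_multi_summable(1)[OF q]])
  show "(\<lambda>\<alpha>. cmod (c0 i \<alpha>) * \<rho> ^ mdeg \<alpha>) summable_on UNIV"
  proof (rule summable_on_comparison_test[OF s])
    fix \<alpha> :: "'n \<Rightarrow> nat"
    have "cmod (c0 i \<alpha>) \<le> M / R ^ mdeg \<alpha>"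
      by (rule coeff_bound[OF Fan e0 c0conv c0eq R(1,2) M(2)])
    then have "cmod (c0 i \<alpha>) * \<rho> ^ mdeg \<alpha> \<le> M / R ^ mdeg \<alpha> * \<rho> ^ mdeg \<alpha>"
      using \<rho> by (intro mult_right_mono) auto
    also have "\<dots> = M * q ^ mdeg \<alpha>" unfolding q_def by (simp add: power_divide)
    finally show "cmod (c0 i \<alpha>) * \<rho> ^ mdeg \<alpha> \<le> M * q ^ mdeg \<alpha>" .
  qed (use \<rho> in auto)
qed

lemma F_global:
  assumes z: "supn z < 1"
  shows "F z $ i = psum (c0 i) z"
proof -
  define s where "s = supn z"
  have s: "0 \<le> s" "s < 1" using z supn_nonneg[of z] unfolding s_def by auto
  define r0 where "r0 = 2 / (1 + s)"
  have r0: "1 < r0" "r0 * s < 1" using s unfolding r0_def by (auto simp: field_simps)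
  let ?\<phi> = "\<lambda>t. F (t *s z) $ i"
  have "?\<phi> holomorphic_on {t. cmod t * supn z < 1}" by (rule F_line_holo[OF Fan])
  then have hol: "?\<phi> holomorphic_on ball 0 r0"
  proof (rule holomorphic_on_subset, intro subsetI)
    fix t :: complex assume "t \<in> ball 0 r0"
    then have "cmod t \<le> r0" by simp
    then have "cmod t * s \<le> r0 * s" using s by (intro mult_right_mono) auto
    then show "t \<in> {t. cmod t * supn z < 1}" using r0 unfolding s_def by simp
  qed
  have "(\<lambda>k. (deriv ^^ k) ?\<phi> 0 / fact k * (1 - 0) ^ k) sums ?\<phi> 1"
    by (rule holomorphic_power_series[OF hol]) (use r0 in simp)
  then have A: "(\<lambda>k. Pk (c0 i) z k) sums F z $ i"
    by (simp add: Pk_deriv[OF Fan e0 c0conv c0eq])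
  have B: "(\<lambda>k. Pk (c0 i) z k) sums psum (c0 i) z"
    unfolding Pk_def by (rule group_deg[OF ps_has_sum[OF c0_conv1 z]])
  show ?thesis using sums_unique2[OF A B] .
qed

end


definition SN :: "nat \<Rightarrow> ('n::finite \<Rightarrow> nat) set" where
  "SN N = {\<alpha>. 1 \<le> mdeg \<alpha> \<and> mdeg \<alpha> \<le> N}"

lemma finite_SN: "finite (SN N)"
  unfolding SN_def by (rule finite_subset[OF _ finite_mdeg_le[of N]]) auto

definition shiftc :: "('n \<Rightarrow> nat) \<Rightarrow> (('n \<Rightarrow> nat) \<Rightarrow> complex) \<Rightarrow> ('n \<Rightarrow> nat) \<Rightarrow> complex" where
  "shiftc \<beta> c \<gamma> = (if (\<forall>k. \<beta> k \<le> \<gamma> k) then c (\<lambda>k. \<gamma> k - \<beta> k) else 0)"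

definition cR :: "complex^'n^'n \<Rightarrow> ('n \<Rightarrow> ('n \<Rightarrow> nat) \<Rightarrow> complex) \<Rightarrow> (('n::finite \<Rightarrow> nat) \<Rightarrow> complex^'n)
      \<Rightarrow> nat \<Rightarrow> 'n \<Rightarrow> ('n \<Rightarrow> nat) \<Rightarrow> complex" where
  "cR A c h N i \<gamma> = (\<Sum>j\<in>UNIV. \<Sum>\<alpha>\<in>SN N. h \<alpha> $ i * of_nat (\<alpha> j) * shiftc (decm j \<alpha>) (c j) \<gamma>)
      - (if \<gamma> \<in> SN N then (A *v h \<gamma>) $ i else 0)"

lemma truncH_comp: "truncH h N w $ i = (\<Sum>\<alpha>\<in>SN N. mpow w \<alpha> * h \<alpha> $ i)"
  unfolding truncH_def SN_def by simp

lemma pd_truncH: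
  "pd j (\<lambda>w. truncH h N w $ i) z = (\<Sum>\<alpha>\<in>SN N. h \<alpha> $ i * (of_nat (\<alpha> j) * mpow z (decm j \<alpha>)))"
proof -
  have "((\<lambda>t. \<Sum>\<alpha>\<in>SN N. mpow (upd z j t) \<alpha> * h \<alpha> $ i) has_field_derivative
          (\<Sum>\<alpha>\<in>SN N. of_nat (\<alpha> j) * mpow (upd z j (z $ j)) (decm j \<alpha>) * h \<alpha> $ i)) (at (z $ j))"
    by (intro DERIV_sum DERIV_cmult_right deriv_mpow_upd)
  then have "deriv (\<lambda>t. \<Sum>\<alpha>\<in>SN N. mpow (upd z j t) \<alpha> * h \<alpha> $ i) (z $ j) =
       (\<Sum>\<alpha>\<in>SN N. of_nat (\<alpha> j) * mpow z (decm j \<alpha>) * h \<alpha> $ i)"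
    by (simp add: DERIV_imp_deriv)
  moreover have "pd j (\<lambda>w. truncH h N w $ i) z = deriv (\<lambda>t. \<Sum>\<alpha>\<in>SN N. mpow (upd z j t) \<alpha> * h \<alpha> $ i) (z $ j)"
    unfolding pd_def truncH_comp upd_def ..
  ultimately show ?thesis by (simp add: mult_ac)
qed

lemma Av_truncH: "(A *v truncH h N z) $ i = (\<Sum>\<gamma>\<in>SN N. (A *v h \<gamma>) $ i * mpow z \<gamma>)"
proof -
  have "(A *v truncH h N z) $ i = (\<Sum>k\<in>UNIV. A $ i $ k * (\<Sum>\<gamma>\<in>SN N. mpow z \<gamma> * h \<gamma> $ k))"
    unfolding matrix_vector_mult_def truncH_comp by simp
  also have "\<dots> = (\<Sum>k\<in>UNIV. \<Sum>\<gamma>\<in>SN N. A $ i $ k * h \<gamma> $ k * mpow z \<gamma>)"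
    by (simp add: sum_distrib_left mult_ac)
  also have "\<dots> = (\<Sum>\<gamma>\<in>SN N. \<Sum>k\<in>UNIV. A $ i $ k * h \<gamma> $ k * mpow z \<gamma>)"
    by (rule sum.swap)
  also have "\<dots> = (\<Sum>\<gamma>\<in>SN N. (A *v h \<gamma>) $ i * mpow z \<gamma>)"
    unfolding matrix_vector_mult_def by (simp add: sum_distrib_right)
  finally show ?thesis .
qed

lemma shift_has_sum:
  assumes "((\<lambda>\<delta>. c \<delta> * mpow z \<delta>) has_sum S) UNIV"
  shows "((\<lambda>\<gamma>. shiftc \<beta> c \<gamma> * mpow z \<gamma>) has_sum (mpow z \<beta> * S)) UNIV"
proof -
  let ?h = "\<lambda>\<delta>. addm \<delta> \<beta>"
  let ?g = "\<lambda>\<gamma>. shiftc \<beta> c \<gamma> * mpow z \<gamma>"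
  have inj: "inj ?h" by (auto simp: inj_def addm_def fun_eq_iff)
  have "((\<lambda>\<delta>. mpow z \<beta> * (c \<delta> * mpow z \<delta>)) has_sum (mpow z \<beta> * S)) UNIV"
    by (rule has_sum_cmult_right[OF assms])
  also have "(\<lambda>\<delta>. mpow z \<beta> * (c \<delta> * mpow z \<delta>)) = ?g \<circ> ?h"
  proof
    fix \<delta>
    have "(\<lambda>k. addm \<delta> \<beta> k - \<beta> k) = \<delta>" by (simp add: addm_def)
    then show "mpow z \<beta> * (c \<delta> * mpow z \<delta>) = (?g \<circ> ?h) \<delta>"
      by (simp add: shiftc_def addm_def mpow_addm[unfolded addm_def] mult_ac)
  qed
  finally have "(?g has_sum (mpow z \<beta> * S)) (range ?h)"
    using has_sum_reindex[OF inj] by blast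
  moreover have "?g \<gamma> = 0" if "\<gamma> \<notin> range ?h" for \<gamma>
  proof -
    have "\<not> (\<forall>k. \<beta> k \<le> \<gamma> k)"
    proof
      assume "\<forall>k. \<beta> k \<le> \<gamma> k"
      then have "\<gamma> = ?h (\<lambda>k. \<gamma> k - \<beta> k)" by (auto simp: addm_def fun_eq_iff)
      with that show False by blast
    qed
    then show ?thesis unfolding shiftc_def by (simp only: if_False) simp
  qed
  ultimately show ?thesis
    by (subst (asm) has_sum_cong_neutral[where T=UNIV and g="?g"]) auto
qed

lemma poly_has_sum:
  assumes "finite S"
  shows "((\<lambda>\<gamma>. (if \<gamma> \<in> S then a \<gamma> else 0) * mpow z \<gamma>) has_sum (\<Sum>\<gamma>\<in>S. a \<gamma> * mpow z \<gamma>)) UNIV"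
proof -
  have "((\<lambda>\<gamma>. (if \<gamma> \<in> S then a \<gamma> else 0) * mpow z \<gamma>) has_sum (\<Sum>\<gamma>\<in>S. (if \<gamma> \<in> S then a \<gamma> else 0) * mpow z \<gamma>)) S"
    by (rule has_sum_finite[OF assms])
  then have "((\<lambda>\<gamma>. (if \<gamma> \<in> S then a \<gamma> else 0) * mpow z \<gamma>) has_sum (\<Sum>\<gamma>\<in>S. a \<gamma> * mpow z \<gamma>)) S"
    by simp
  then show ?thesis
    by (subst (asm) has_sum_cong_neutral[where T=UNIV]) auto
qed

lemma R_has_sum:
  fixes F :: "complex^'n::finite \<Rightarrow> complex^'n"
  assumes cconv: "\<And>j. ps_conv (c j) 1" and ceq: "\<And>j z. supn z < 1 \<Longrightarrow> F z $ j = psum (c j) z"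
    and z: "supn z < 1"
  shows "((\<lambda>\<gamma>. cR A c h N i \<gamma> * mpow z \<gamma>) has_sum remR A F h N z $ i) UNIV"
proof -
  have T: "((\<lambda>\<gamma>. h \<alpha> $ i * of_nat (\<alpha> j) * shiftc (decm j \<alpha>) (c j) \<gamma> * mpow z \<gamma>) has_sum
        (h \<alpha> $ i * (of_nat (\<alpha> j) * mpow z (decm j \<alpha>)) * F z $ j)) UNIV" for j \<alpha>
  proof -
    have "((\<lambda>\<gamma>. shiftc (decm j \<alpha>) (c j) \<gamma> * mpow z \<gamma>) has_sum (mpow z (decm j \<alpha>) * F z $ j)) UNIV"
      using shift_has_sum[OF ps_has_sum[OF cconv z]] ceq[OF z] by simp
    from has_sum_cmult_right[OF this, of "h \<alpha> $ i * of_nat (\<alpha> j)"] show ?thesis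
      by (simp add: mult_ac)
  qed
  have T2: "((\<lambda>\<gamma>. \<Sum>j\<in>UNIV. \<Sum>\<alpha>\<in>SN N. h \<alpha> $ i * of_nat (\<alpha> j) * shiftc (decm j \<alpha>) (c j) \<gamma> * mpow z \<gamma>) has_sum
        (\<Sum>j\<in>UNIV. \<Sum>\<alpha>\<in>SN N. h \<alpha> $ i * (of_nat (\<alpha> j) * mpow z (decm j \<alpha>)) * F z $ j)) UNIV"
    by (intro has_sum_sum T finite_SN) auto
  have P: "((\<lambda>\<gamma>. (if \<gamma> \<in> SN N then (A *v h \<gamma>) $ i else 0) * mpow z \<gamma>) has_sum (A *v truncH h N z) $ i) UNIV"
    unfolding Av_truncH by (rule poly_has_sum[OF finite_SN])
  have "((\<lambda>\<gamma>. (\<Sum>j\<in>UNIV. \<Sum>\<alpha>\<in>SN N. h \<alpha> $ i * of_nat (\<alpha> j) * shiftc (decm j \<alpha>) (c j) \<gamma> * mpow z \<gamma>)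
          - (if \<gamma> \<in> SN N then (A *v h \<gamma>) $ i else 0) * mpow z \<gamma>) has_sum
        ((\<Sum>j\<in>UNIV. \<Sum>\<alpha>\<in>SN N. h \<alpha> $ i * (of_nat (\<alpha> j) * mpow z (decm j \<alpha>)) * F z $ j) - (A *v truncH h N z) $ i)) UNIV"
    by (rule has_sum_diff[OF T2 P])
  moreover have "(\<lambda>\<gamma>. (\<Sum>j\<in>UNIV. \<Sum>\<alpha>\<in>SN N. h \<alpha> $ i * of_nat (\<alpha> j) * shiftc (decm j \<alpha>) (c j) \<gamma> * mpow z \<gamma>)
          - (if \<gamma> \<in> SN N then (A *v h \<gamma>) $ i else 0) * mpow z \<gamma>) = (\<lambda>\<gamma>. cR A c h N i \<gamma> * mpow z \<gamma>)"
    unfolding cR_def by (simp add: sum_distrib_right left_diff_distrib)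
  moreover have "(\<Sum>j\<in>UNIV. \<Sum>\<alpha>\<in>SN N. h \<alpha> $ i * (of_nat (\<alpha> j) * mpow z (decm j \<alpha>)) * F z $ j) - (A *v truncH h N z) $ i
       = remR A F h N z $ i"
    unfolding remR_def pd_truncH by (simp add: sum_distrib_right)
  ultimately show ?thesis by simp
qed


lemma mdeg_le_mono: "(\<And>k. \<alpha> k \<le> \<beta> k) \<Longrightarrow> mdeg \<alpha> \<le> mdeg \<beta>"
  unfolding mdeg_def by (rule sum_mono)

lemma mdeg_mono_eq:
  fixes \<alpha> \<beta> :: "'n::finite \<Rightarrow> nat"
  assumes "\<And>k. \<alpha> k \<le> \<beta> k" "mdeg \<beta> \<le> mdeg \<alpha>"
  shows "\<alpha> = \<beta>"
proof -
  have "mdeg \<beta> = (\<Sum>k\<in>UNIV. \<alpha> k + (\<beta> k - \<alpha> k))"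
    unfolding mdeg_def using assms(1) by (intro sum.cong) (auto simp: le_add_diff_inverse)
  also have "\<dots> = mdeg \<alpha> + (\<Sum>k\<in>UNIV. \<beta> k - \<alpha> k)"
    unfolding mdeg_def by (rule sum.distrib)
  finally have "(\<Sum>k\<in>UNIV. \<beta> k - \<alpha> k) = 0" using assms(2) by simp
  then have "\<beta> k - \<alpha> k = 0" for k by simp
  then show ?thesis using assms(1) by (auto simp: fun_eq_iff intro: antisym)
qed

lemma cR_low:
  fixes F :: "complex^'n::finite \<Rightarrow> complex^'n"
  assumes formal: "formal_conj A F h"
    and tc: "\<And>\<alpha> j. tcoeff F \<alpha> $ j = c j \<alpha>"
    and c00: "\<And>j. c j (\<lambda>_. 0) = 0"
    and h0: "\<forall>\<alpha>. mdeg \<alpha> = 0 \<longrightarrow> h \<alpha> = 0"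
    and deg: "mdeg \<gamma> \<le> N"
  shows "cR A c h N i \<gamma> = 0"
proof -
  define T where "T j = {\<alpha>. (\<forall>k. \<alpha> k \<le> \<gamma> k + eidx j k) \<and> 1 \<le> \<alpha> j}" for j
  have claim: "(\<Sum>\<alpha>\<in>SN N. h \<alpha> $ i * of_nat (\<alpha> j) * shiftc (decm j \<alpha>) (c j) \<gamma>) =
        (\<Sum>\<alpha>\<in>T j. of_nat (\<alpha> j) * h \<alpha> $ i * tcoeff F (\<lambda>k. \<gamma> k + eidx j k - \<alpha> k) $ j)" for j
  proof -
    let ?U = "SN N \<inter> T j"
    have finT: "finite (T j)"
    proof (rule finite_subset[OF _ finite_mdeg_le[of "mdeg \<gamma> + 1"]])
      show "T j \<subseteq> {\<alpha>. mdeg \<alpha> \<le> mdeg \<gamma> + 1}"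
      proof
        fix \<alpha> assume "\<alpha> \<in> T j"
        then have "mdeg \<alpha> \<le> mdeg (addm \<gamma> (eidx j))"
          unfolding T_def by (intro mdeg_le_mono) (auto simp: addm_def)
        then show "\<alpha> \<in> {\<alpha>. mdeg \<alpha> \<le> mdeg \<gamma> + 1}" by (simp add: mdeg_addm mdeg_eidx)
      qed
    qed
    have L: "(\<Sum>\<alpha>\<in>SN N. h \<alpha> $ i * of_nat (\<alpha> j) * shiftc (decm j \<alpha>) (c j) \<gamma>) =
             (\<Sum>\<alpha>\<in>?U. h \<alpha> $ i * of_nat (\<alpha> j) * shiftc (decm j \<alpha>) (c j) \<gamma>)"
    proof (rule sum.mono_neutral_right[OF finite_SN], blast, rule ballI)
      fix \<alpha> assume a: "\<alpha> \<in> SN N - ?U"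
      show "h \<alpha> $ i * of_nat (\<alpha> j) * shiftc (decm j \<alpha>) (c j) \<gamma> = 0"
      proof (cases "\<alpha> j = 0")
        case True then show ?thesis by simp
      next
        case False
        with a obtain k where k: "\<not> \<alpha> k \<le> \<gamma> k + eidx j k" unfolding T_def by auto
        then have "\<not> decm j \<alpha> k \<le> \<gamma> k" unfolding decm_def by (auto simp: eidx_def)
        then show ?thesis unfolding shiftc_def by auto
      qed
    qed
    have R: "(\<Sum>\<alpha>\<in>T j. of_nat (\<alpha> j) * h \<alpha> $ i * tcoeff F (\<lambda>k. \<gamma> k + eidx j k - \<alpha> k) $ j) =
             (\<Sum>\<alpha>\<in>?U. of_nat (\<alpha> j) * h \<alpha> $ i * tcoeff F (\<lambda>k. \<gamma> k + eidx j k - \<alpha> k) $ j)"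
    proof (rule sum.mono_neutral_right[OF finT], blast, rule ballI)
      fix \<alpha> assume a: "\<alpha> \<in> T j - ?U"
      then have aT: "\<forall>k. \<alpha> k \<le> \<gamma> k + eidx j k" "1 \<le> \<alpha> j" and aS: "\<alpha> \<notin> SN N" unfolding T_def by auto
      have "1 \<le> mdeg \<alpha>" using aT(2) mdeg_ge_comp[of \<alpha> j] by simp
      with aS have "N < mdeg \<alpha>" unfolding SN_def by auto
      then have "mdeg (addm \<gamma> (eidx j)) \<le> mdeg \<alpha>" using deg by (simp add: mdeg_addm mdeg_eidx)
      then have "\<alpha> = addm \<gamma> (eidx j)" by (rule mdeg_mono_eq[rotated]) (use aT in \<open>simp add: addm_def\<close>)
      then have "(\<lambda>k. \<gamma> k + eidx j k - \<alpha> k) = (\<lambda>_. 0)" by (simp add: addm_def)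
      then show "of_nat (\<alpha> j) * h \<alpha> $ i * tcoeff F (\<lambda>k. \<gamma> k + eidx j k - \<alpha> k) $ j = 0"
        by (simp add: tc c00)
    qed
    have M: "(\<Sum>\<alpha>\<in>?U. h \<alpha> $ i * of_nat (\<alpha> j) * shiftc (decm j \<alpha>) (c j) \<gamma>) =
             (\<Sum>\<alpha>\<in>?U. of_nat (\<alpha> j) * h \<alpha> $ i * tcoeff F (\<lambda>k. \<gamma> k + eidx j k - \<alpha> k) $ j)"
    proof (rule sum.cong[OF refl])
      fix \<alpha> assume "\<alpha> \<in> ?U"
      then have aT: "\<forall>k. \<alpha> k \<le> \<gamma> k + eidx j k" "1 \<le> \<alpha> j" unfolding T_def by auto
      have le: "\<forall>k. decm j \<alpha> k \<le> \<gamma> k" using aT(1) unfolding decm_def by (auto simp: eidx_def le_diff_conv)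
      have eqf: "(\<lambda>k. \<gamma> k - decm j \<alpha> k) = (\<lambda>k. \<gamma> k + eidx j k - \<alpha> k)"
      proof
        fix k show "\<gamma> k - decm j \<alpha> k = \<gamma> k + eidx j k - \<alpha> k"
          using aT(1)[rule_format, of k] aT(2) unfolding decm_def eidx_def by auto
      qed
      show "h \<alpha> $ i * of_nat (\<alpha> j) * shiftc (decm j \<alpha>) (c j) \<gamma> =
            of_nat (\<alpha> j) * h \<alpha> $ i * tcoeff F (\<lambda>k. \<gamma> k + eidx j k - \<alpha> k) $ j"
        unfolding shiftc_def using le eqf by (simp add: tc)
    qed
    show ?thesis using L M R by simp
  qed
  have sumA: "(\<Sum>j\<in>UNIV. \<Sum>\<alpha>\<in>SN N. h \<alpha> $ i * of_nat (\<alpha> j) * shiftc (decm j \<alpha>) (c j) \<gamma>) = (A *v h \<gamma>) $ i"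
  proof -
    have f: "(\<Sum>j\<in>UNIV. \<Sum>\<alpha>\<in>T j. of_nat (\<alpha> j) * h \<alpha> $ i * tcoeff F (\<lambda>k. \<gamma> k + eidx j k - \<alpha> k) $ j) = (A *v h \<gamma>) $ i"
      using formal unfolding formal_conj_def T_def by blast
    show ?thesis unfolding claim using f .
  qed
  show ?thesis
  proof (cases "\<gamma> \<in> SN N")
    case True then show ?thesis unfolding cR_def sumA by simp
  next
    case False
    then have "mdeg \<gamma> = 0" using deg unfolding SN_def by auto
    then have "h \<gamma> = 0" using h0 by simp
    then show ?thesis unfolding cR_def sumA using False by simp
  qed
qed

lemma cR_bound:
  assumes R: "0 < R" "R \<le> 1" and cb: "\<And>j \<delta>. cmod (c j \<delta>) \<le> MR / R ^ mdeg \<delta>"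
    and deg: "N + 1 \<le> mdeg \<gamma>"
  shows "cmod (cR A c h N i \<gamma>) \<le> MR / R ^ mdeg \<gamma> * (\<Sum>\<alpha>\<in>SN N. supn (h \<alpha>) * real (mdeg \<alpha>))"
proof -
  define K where "K = MR / R ^ mdeg \<gamma>"
  have "0 \<le> MR / R ^ mdeg \<gamma>"
    using cb[of undefined \<gamma>] norm_ge_zero[of "c undefined \<gamma>"] by linarith
  then have MR: "MR \<ge> 0" using R zero_less_power[OF R(1), of "mdeg \<gamma>"] by (auto simp: zero_le_divide_iff)
  have K: "K \<ge> 0" unfolding K_def using MR R by simp
  have nS: "\<gamma> \<notin> SN N" using deg unfolding SN_def by auto
  have sb: "cmod (shiftc (decm j \<alpha>) (c j) \<gamma>) \<le> K" for j \<alpha>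
  proof (cases "\<forall>k. decm j \<alpha> k \<le> \<gamma> k")
    case True
    define \<delta> where "\<delta> = (\<lambda>k. \<gamma> k - decm j \<alpha> k)"
    have "mdeg \<delta> \<le> mdeg \<gamma>" unfolding \<delta>_def by (intro mdeg_le_mono) auto
    then have "R ^ mdeg \<gamma> \<le> R ^ mdeg \<delta>" using R by (intro power_decreasing) auto
    then have "MR / R ^ mdeg \<delta> \<le> K" unfolding K_def using MR R
      by (intro divide_left_mono) auto
    then show ?thesis using cb[of j \<delta>] True unfolding shiftc_def \<delta>_def by simp
  next
    case False then show ?thesis using K unfolding shiftc_def by auto
  qed
  have "cmod (cR A c h N i \<gamma>) = cmod (\<Sum>j\<in>UNIV. \<Sum>\<alpha>\<in>SN N. h \<alpha> $ i * of_nat (\<alpha> j) * shiftc (decm j \<alpha>) (c j) \<gamma>)"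
    unfolding cR_def using nS by simp
  also have "\<dots> \<le> (\<Sum>j\<in>UNIV. cmod (\<Sum>\<alpha>\<in>SN N. h \<alpha> $ i * of_nat (\<alpha> j) * shiftc (decm j \<alpha>) (c j) \<gamma>))"
    by (rule norm_sum)
  also have "\<dots> \<le> (\<Sum>j\<in>UNIV. \<Sum>\<alpha>\<in>SN N. cmod (h \<alpha> $ i * of_nat (\<alpha> j) * shiftc (decm j \<alpha>) (c j) \<gamma>))"
    by (intro sum_mono norm_sum)
  also have "\<dots> \<le> (\<Sum>j\<in>UNIV. \<Sum>\<alpha>\<in>SN N. supn (h \<alpha>) * real (\<alpha> j) * K)"
  proof (intro sum_mono)
    fix j \<alpha>
    have "cmod (h \<alpha> $ i * of_nat (\<alpha> j) * shiftc (decm j \<alpha>) (c j) \<gamma>) =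
          cmod (h \<alpha> $ i) * real (\<alpha> j) * cmod (shiftc (decm j \<alpha>) (c j) \<gamma>)"
      by (simp add: norm_mult)
    also have "\<dots> \<le> supn (h \<alpha>) * real (\<alpha> j) * K"
      using supn_ge[of "h \<alpha>" i] sb[of j \<alpha>] K supn_nonneg[of "h \<alpha>"]
      by (intro mult_mono) (auto intro: mult_nonneg_nonneg)
    finally show "cmod (h \<alpha> $ i * of_nat (\<alpha> j) * shiftc (decm j \<alpha>) (c j) \<gamma>) \<le> supn (h \<alpha>) * real (\<alpha> j) * K" .
  qed
  also have "\<dots> = (\<Sum>\<alpha>\<in>SN N. \<Sum>j\<in>UNIV. supn (h \<alpha>) * real (\<alpha> j) * K)"
    by (rule sum.swap)
  also have "\<dots> = K * (\<Sum>\<alpha>\<in>SN N. supn (h \<alpha>) * real (mdeg \<alpha>))"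
    unfolding mdeg_def by (simp add: sum_distrib_left sum_distrib_right mult_ac)
  finally show ?thesis unfolding K_def .
qed


lemma card_SN: "card (SN N :: ('n::finite \<Rightarrow> nat) set) \<le> (N + 1) ^ CARD('n)"
proof -
  have "SN N \<subseteq> PiE (UNIV::'n set) (\<lambda>_. {..N})"
  proof
    fix \<alpha> :: "'n \<Rightarrow> nat" assume "\<alpha> \<in> SN N"
    then have "\<alpha> j \<le> N" for j using mdeg_ge_comp[of \<alpha> j] unfolding SN_def by auto
    then show "\<alpha> \<in> PiE UNIV (\<lambda>_. {..N})" by auto
  qed
  then have "card (SN N :: ('n \<Rightarrow> nat) set) \<le> card (PiE (UNIV::'n set) (\<lambda>_. {..N}))"
    by (intro card_mono finite_PiE) auto
  also have "\<dots> = (N + 1) ^ CARD('n)" by (simp add: card_PiE)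
  finally show ?thesis .
qed

lemma Suc_le_two_pow: "N + 1 \<le> (2::nat) ^ N"
  by (induction N) auto

lemma gevrey_sum:
  fixes h :: "('n::finite \<Rightarrow> nat) \<Rightarrow> complex^'n" and A1 B1 s :: real
  assumes A1: "A1 > 0" and B1: "B1 > 0" and s: "s > 0"
    and gev: "\<forall>\<alpha>. 1 \<le> mdeg \<alpha> \<longrightarrow> supn (h \<alpha>) \<le> A1 * B1 powr (- s * mdeg \<alpha>) * (fact (mdeg \<alpha>)) powr s"
  shows "(\<Sum>\<alpha>\<in>SN N. supn (h \<alpha>) * real (mdeg \<alpha>))
           \<le> A1 * (2 ^ (CARD('n) + 1) * max 1 (B1 powr (-s))) ^ N * (fact N) powr s"
proof -
  define c1 where "c1 = max 1 (B1 powr (-s))"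
  have c1: "c1 \<ge> 1" unfolding c1_def by simp
  define K where "K = A1 * c1 ^ N * (fact N) powr s * 2 ^ N"
  have tb: "supn (h \<alpha>) * real (mdeg \<alpha>) \<le> K" if a: "\<alpha> \<in> SN N" for \<alpha>
  proof -
    define k where "k = mdeg \<alpha>"
    have k: "1 \<le> k" "k \<le> N" using a unfolding SN_def k_def by auto
    have "(B1 powr (-s)) ^ k = (B1 powr (-s)) powr (real k)"
      using B1 by (simp add: powr_realpow)
    also have "\<dots> = B1 powr (- s * real k)" by (simp add: powr_powr)
    finally have "B1 powr (- s * real k) = (B1 powr (-s)) ^ k" ..
    also have "\<dots> \<le> c1 ^ k" unfolding c1_def by (intro power_mono) auto
    also have "\<dots> \<le> c1 ^ N" using c1 k by (intro power_increasing) auto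
    finally have b1: "B1 powr (- s * real k) \<le> c1 ^ N" .
    have b2: "(fact k) powr s \<le> (fact N :: real) powr s"
      using s k by (intro powr_mono2) (auto intro: fact_mono)
    have b3: "real k \<le> 2 ^ N"
    proof -
      have "k \<le> 2 ^ N" using Suc_le_two_pow[of N] k by linarith
      then show ?thesis by (metis of_nat_le_iff of_nat_numeral of_nat_power)
    qed
    have "supn (h \<alpha>) \<le> A1 * B1 powr (- s * real k) * (fact k) powr s"
      using gev k unfolding k_def by auto
    also have "\<dots> \<le> A1 * c1 ^ N * (fact N) powr s"
      using A1 b1 b2 c1 by (intro mult_mono) auto
    finally have "supn (h \<alpha>) \<le> A1 * c1 ^ N * (fact N) powr s" .
    then have "supn (h \<alpha>) * real k \<le> (A1 * c1 ^ N * (fact N) powr s) * 2 ^ N"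
      using b3 supn_nonneg[of "h \<alpha>"] A1 c1 by (intro mult_mono) auto
    then show ?thesis unfolding K_def k_def .
  qed
  have "(\<Sum>\<alpha>\<in>SN N. supn (h \<alpha>) * real (mdeg \<alpha>)) \<le> real (card (SN N :: ('n \<Rightarrow> nat) set)) * K"
    by (rule sum_bounded_above) (use tb in auto)
  also have "\<dots> \<le> real ((2 ^ N) ^ CARD('n)) * K"
  proof (rule mult_right_mono)
    have "card (SN N :: ('n \<Rightarrow> nat) set) \<le> (N + 1) ^ CARD('n)" by (rule card_SN)
    also have "\<dots> \<le> (2 ^ N) ^ CARD('n)" by (intro power_mono Suc_le_two_pow) auto
    finally show "real (card (SN N :: ('n \<Rightarrow> nat) set)) \<le> real ((2 ^ N) ^ CARD('n))" by linarith
    show "0 \<le> K" unfolding K_def using A1 c1 by auto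
  qed
  also have "\<dots> = A1 * (2 ^ (CARD('n) + 1) * c1) ^ N * (fact N) powr s"
  proof -
    have e1: "((2::real) ^ N) ^ CARD('n) * 2 ^ N = (2 ^ (CARD('n) + 1)) ^ N"
    proof -
      have "((2::real) ^ N) ^ CARD('n) * 2 ^ N = 2 ^ (N * CARD('n) + N)"
        by (simp only: power_mult[symmetric] power_add[symmetric])
      also have "\<dots> = 2 ^ ((CARD('n) + 1) * N)" by (simp add: algebra_simps)
      also have "\<dots> = (2 ^ (CARD('n) + 1)) ^ N" by (simp only: power_mult)
      finally show ?thesis .
    qed
    have "real ((2 ^ N) ^ CARD('n)) * K = (((2::real) ^ N) ^ CARD('n) * 2 ^ N) * c1 ^ N * (A1 * (fact N) powr s)"
      unfolding K_def by (simp add: mult_ac)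
    also have "\<dots> = A1 * (2 ^ (CARD('n) + 1) * c1) ^ N * (fact N) powr s"
      unfolding e1 by (simp add: power_mult_distrib mult_ac)
    finally show ?thesis .
  qed
  finally show ?thesis unfolding c1_def .
qed


lemma geom_tail_bound:
  fixes q :: real
  assumes q: "0 \<le> q" "q \<le> 1/4" and m: "N + 1 \<le> m"
  shows "q ^ m \<le> (4 * q) ^ (N + 1) * (1/4) ^ m"
proof -
  define d where "d = m - (N + 1)"
  have md: "m = (N + 1) + d" using m unfolding d_def by simp
  have "q ^ m = q ^ (N + 1) * q ^ d" unfolding md by (simp add: power_add)
  also have "\<dots> \<le> q ^ (N + 1) * (1/4) ^ d"
    using q by (intro mult_left_mono power_mono) auto
  also have "\<dots> = (4 * q) ^ (N + 1) * (1/4) ^ m"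
    unfolding md power_add power_mult_distrib by (simp add: power_one_over field_simps)
  finally show ?thesis .
qed

lemma supn_leI: "(\<And>i. cmod (v $ i) \<le> X) \<Longrightarrow> supn v \<le> X"
  unfolding supn_le_iff by blast

lemma mfact_pos: "mfact \<alpha> > 0"
  unfolding mfact_def by (intro prod_pos) auto


theorem mainTheorem2:
  fixes F f :: "complex^'n::finite \<Rightarrow> complex^'n"
    and A :: "complex^'n^'n"
    and h :: "('n \<Rightarrow> nat) \<Rightarrow> complex^'n"
    and s :: real
  assumes F_an: "analytic_vec polydisc1 F"
    and F_eq: "\<forall>z\<in>polydisc1. F z = A *v z + f z"
    and f0: "f 0 = 0"
    and Df0: "(f has_derivative (\<lambda>_. 0)) (at 0)"
    and h0: "\<forall>\<alpha>. mdeg \<alpha> = 0 \<longrightarrow> h \<alpha> = 0"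
    and h1: "\<forall>j. h (eidx j) = axis j 1"
    and formal: "formal_conj A F h"
    and s_pos: "s > 0"
    and gevrey: "\<exists>A1>0. \<exists>B1>0. \<forall>\<alpha>. 1 \<le> mdeg \<alpha> \<longrightarrow>
                   supn (h \<alpha>) \<le> A1 * B1 powr (- s * mdeg \<alpha>) * (fact (mdeg \<alpha>)) powr s"
  shows "(\<forall>N\<ge>1. \<forall>\<alpha> i. mdeg \<alpha> \<le> N \<longrightarrow> pdiff \<alpha> (\<lambda>z. remR A F h N z $ i) 0 = 0)
       \<and> (\<forall>r. 0 < r \<and> r < 1 \<longrightarrow> (\<exists>A2>0. \<exists>B2>0. \<forall>N\<ge>1. \<forall>\<alpha>. N + 1 \<le> mdeg \<alpha> \<longrightarrow>
            supn (tcoeff (remR A F h N) \<alpha>)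
              \<le> A2 * r powr (- real (mdeg \<alpha>)) * B2 powr (- s * N) * (fact N) powr s))
       \<and> (\<forall>r. 0 < r \<and> r < 1 \<longrightarrow> (\<exists>A3>0. \<exists>B3>0. \<forall>N\<ge>1. \<forall>z. supn z < r / 4 \<longrightarrow>
            supn (remR A F h N z)
              \<le> A3 * B3 powr (- s * N) * (fact N) powr s * (supn z / r) ^ (N + 1)))"
proof -
  have p0: "(0::complex^'n) \<in> polydisc1" by (simp add: polydisc1_iff)
  obtain e0 and c0 :: "'n \<Rightarrow> ('n \<Rightarrow> nat) \<Rightarrow> complex" where e0: "e0 > 0"
    and c0conv: "\<And>i. ps_conv (c0 i) e0"
    and c0eq0: "\<And>i z. supn (z - 0) < e0 \<Longrightarrow> F z $ i = psum (c0 i) (z - 0)"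
    using analytic_vec_comp[OF F_an p0] by blast
  have c0eq: "\<And>i z. supn z < e0 \<Longrightarrow> F z $ i = psum (c0 i) z" using c0eq0 by simp
  have conv1: "\<And>i. ps_conv (c0 i) 1" by (rule c0_conv1[OF F_an e0 c0conv c0eq])
  have eq1: "\<And>i z. supn z < 1 \<Longrightarrow> F z $ i = psum (c0 i) z" by (rule F_global[OF F_an e0 c0conv c0eq])
  have tc: "tcoeff F \<alpha> $ j = c0 j \<alpha>" for \<alpha> j
  proof -
    have "pdiff \<alpha> (\<lambda>z. F z $ j) 0 = c0 j \<alpha> * of_real (mfact \<alpha>)"
      by (rule pdiff_ps[OF conv1 zero_less_one eq1])
    then show ?thesis unfolding tcoeff_def using mfact_pos[of \<alpha>] by simp
  qed
  have c00: "c0 j (\<lambda>_. 0) = 0" for j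
  proof -
    have "c0 j (\<lambda>_. 0) = psum (c0 j) 0" by (simp add: psum_zero)
    also have "\<dots> = F 0 $ j" using eq1[of 0 j] by simp
    also have "F 0 = 0" using F_eq p0 f0 by simp
    finally show ?thesis by simp
  qed
  obtain A1 B1 where A1: "A1 > 0" and B1: "B1 > 0" and gev: "\<forall>\<alpha>. 1 \<le> mdeg \<alpha> \<longrightarrow>
                   supn (h \<alpha>) \<le> A1 * B1 powr (- s * mdeg \<alpha>) * (fact (mdeg \<alpha>)) powr s"
    using gevrey by blast
  define b where "b = 2 ^ (CARD('n) + 1) * max 1 (B1 powr (-s))"
  have b: "b \<ge> 1"
  proof -
    have h1: "(1::real) \<le> 2 ^ (CARD('n) + 1)" by (rule one_le_power) simp
    have h2: "(1::real) \<le> max 1 (B1 powr (-s))" by simp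
    show ?thesis using mult_mono[OF h1 h2] unfolding b_def by simp
  qed
  define fN where "fN N = (fact N :: real) powr s" for N
  have fN: "fN N \<ge> 0" for N unfolding fN_def by simp
  have gs: "(\<Sum>\<alpha>\<in>SN N. supn (h \<alpha>) * real (mdeg \<alpha>)) \<le> A1 * b ^ N * fN N" for N
    unfolding b_def fN_def by (rule gevrey_sum[OF A1 B1 s_pos gev])
  have low: "cR A c0 h N i \<gamma> = 0" if "mdeg \<gamma> \<le> N" for N i \<gamma>
    by (rule cR_low[OF formal tc c00 h0 that])
  have KB: "\<exists>MR\<ge>0. \<forall>N i \<gamma>. N + 1 \<le> mdeg \<gamma> \<longrightarrow>
              cmod (cR A c0 h N i \<gamma>) \<le> MR / r ^ mdeg \<gamma> * (A1 * b ^ N * fN N)"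
    if r: "0 < r" "r < 1" for r
  proof -
    obtain MR where MR: "MR \<ge> 0" "\<And>z i. supn z \<le> r \<Longrightarrow> cmod (F z $ i) \<le> MR"
      using F_bound[OF F_an r(2)] by blast
    have cb: "cmod (c0 j \<delta>) \<le> MR / r ^ mdeg \<delta>" for j \<delta>
      by (rule coeff_bound[OF F_an e0 c0conv c0eq r MR(2)])
    show ?thesis
    proof (intro exI conjI allI impI)
      fix N i \<gamma> assume deg: "N + 1 \<le> mdeg (\<gamma>::'n \<Rightarrow> nat)"
      have "cmod (cR A c0 h N i \<gamma>) \<le> MR / r ^ mdeg \<gamma> * (\<Sum>\<alpha>\<in>SN N. supn (h \<alpha>) * real (mdeg \<alpha>))"
        by (rule cR_bound[OF r(1) _ cb deg]) (use r in simp)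
      also have "\<dots> \<le> MR / r ^ mdeg \<gamma> * (A1 * b ^ N * fN N)"
        using MR r by (intro mult_left_mono gs) auto
      finally show "cmod (cR A c0 h N i \<gamma>) \<le> MR / r ^ mdeg \<gamma> * (A1 * b ^ N * fN N)" .
    qed (rule MR(1))
  qed
  have convR: "ps_conv (cR A c0 h N i) 1" for N i
    unfolding ps_conv_def
  proof (intro allI impI)
    fix \<rho> :: real assume \<rho>: "0 \<le> \<rho>" "\<rho> < 1"
    define r where "r = (\<rho> + 1) / 2"
    have r: "0 < r" "r < 1" "\<rho> < r" using \<rho> unfolding r_def by auto
    obtain MR where MR: "MR \<ge> 0" and MRb: "\<And>N i \<gamma>. N + 1 \<le> mdeg \<gamma> \<Longrightarrow>
              cmod (cR A c0 h N i \<gamma>) \<le> MR / r ^ mdeg \<gamma> * (A1 * b ^ N * fN N)"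
      using KB[OF r(1,2)] by blast
    define K where "K = MR * (A1 * b ^ N * fN N)"
    have K: "K \<ge> 0" unfolding K_def using MR A1 b fN[of N] by auto
    define q where "q = \<rho> / r"
    have q: "0 \<le> q" "q < 1" using \<rho> r unfolding q_def by auto
    have s1: "(\<lambda>\<gamma>::'n\<Rightarrow>nat. K * q ^ mdeg \<gamma>) summable_on UNIV"
      by (rule summable_on_cmult_right[OF geom_multi_summable(1)[OF q]])
    show "(\<lambda>\<gamma>. cmod (cR A c0 h N i \<gamma>) * \<rho> ^ mdeg \<gamma>) summable_on UNIV"
    proof (rule summable_on_comparison_test[OF s1])
      fix \<gamma> :: "'n \<Rightarrow> nat"
      show "cmod (cR A c0 h N i \<gamma>) * \<rho> ^ mdeg \<gamma> \<le> K * q ^ mdeg \<gamma>"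
      proof (cases "mdeg \<gamma> \<le> N")
        case True then show ?thesis using low[OF True] K q by simp
      next
        case False
        then have "cmod (cR A c0 h N i \<gamma>) \<le> MR / r ^ mdeg \<gamma> * (A1 * b ^ N * fN N)"
          by (intro MRb) auto
        then have "cmod (cR A c0 h N i \<gamma>) * \<rho> ^ mdeg \<gamma> \<le> MR / r ^ mdeg \<gamma> * (A1 * b ^ N * fN N) * \<rho> ^ mdeg \<gamma>"
          using \<rho> by (intro mult_right_mono) auto
        also have "\<dots> = K * q ^ mdeg \<gamma>" unfolding K_def q_def by (simp add: power_divide)
        finally show ?thesis .
      qed
    qed (use \<rho> in auto)
  qed
  have Rsum: "((\<lambda>\<gamma>. cR A c0 h N i \<gamma> * mpow z \<gamma>) has_sum remR A F h N z $ i) UNIV"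
    if "supn z < 1" for N i z
    by (rule R_has_sum[OF conv1 eq1 that])
  have Req: "remR A F h N z $ i = psum (cR A c0 h N i) z" if "supn z < 1" for N i z
    using infsumI[OF Rsum[OF that, of N i]] unfolding psum_def by simp
  have pdR: "pdiff \<alpha> (\<lambda>z. remR A F h N z $ i) 0 = cR A c0 h N i \<alpha> * of_real (mfact \<alpha>)" for N i \<alpha>
    by (rule pdiff_ps[OF convR zero_less_one Req])
  have tcR: "tcoeff (remR A F h N) \<alpha> $ i = cR A c0 h N i \<alpha>" for N i \<alpha>
    unfolding tcoeff_def using pdR mfact_pos[of \<alpha>] by simp
  have part1: "\<forall>N\<ge>1. \<forall>\<alpha> i. mdeg \<alpha> \<le> N \<longrightarrow> pdiff \<alpha> (\<lambda>z. remR A F h N z $ i) 0 = 0"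
    using pdR low by simp
  have Bpow: "(c powr (-1/s)) powr (- s * real N) = c ^ N" if "c > 0" for c :: real and N
  proof -
    have "(c powr (-1/s)) powr (- s * real N) = c powr (real N)"
      using s_pos by (simp add: powr_powr)
    also have "\<dots> = c ^ N" using that by (simp add: powr_realpow)
    finally show ?thesis .
  qed
  have part2: "\<forall>r. 0 < r \<and> r < 1 \<longrightarrow> (\<exists>A2>0. \<exists>B2>0. \<forall>N\<ge>1. \<forall>\<alpha>. N + 1 \<le> mdeg \<alpha> \<longrightarrow>
            supn (tcoeff (remR A F h N) \<alpha>)
              \<le> A2 * r powr (- real (mdeg \<alpha>)) * B2 powr (- s * N) * (fact N) powr s)"
  proof (intro allI impI)
    fix r :: real assume "0 < r \<and> r < 1"
    then have r: "0 < r" "r < 1" by auto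
    obtain MR where MR: "MR \<ge> 0" and MRb: "\<And>N i \<gamma>. N + 1 \<le> mdeg \<gamma> \<Longrightarrow>
              cmod (cR A c0 h N i \<gamma>) \<le> MR / r ^ mdeg \<gamma> * (A1 * b ^ N * fN N)"
      using KB[OF r] by blast
    show "\<exists>A2>0. \<exists>B2>0. \<forall>N\<ge>1. \<forall>\<alpha>. N + 1 \<le> mdeg \<alpha> \<longrightarrow>
            supn (tcoeff (remR A F h N) \<alpha>)
              \<le> A2 * r powr (- real (mdeg \<alpha>)) * B2 powr (- s * N) * (fact N) powr s"
    proof (intro exI conjI allI impI)
      show "MR * A1 + 1 > 0" using MR A1 by (simp add: add_nonneg_pos)
      show "b powr (-1/s) > 0" using b by simp
      fix N :: nat and \<alpha> :: "'n \<Rightarrow> nat" assume "1 \<le> N" and deg: "N + 1 \<le> mdeg \<alpha>"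
      show "supn (tcoeff (remR A F h N) \<alpha>)
              \<le> (MR * A1 + 1) * r powr (- real (mdeg \<alpha>)) * (b powr (-1/s)) powr (- s * N) * (fact N) powr s"
      proof (rule supn_leI)
        fix i
        have rp: "r powr (- real (mdeg \<alpha>)) = 1 / r ^ mdeg \<alpha>"
          using r by (simp add: powr_minus powr_realpow divide_inverse)
        have "cmod (tcoeff (remR A F h N) \<alpha> $ i) \<le> MR / r ^ mdeg \<alpha> * (A1 * b ^ N * fN N)"
          unfolding tcR by (rule MRb[OF deg])
        also have "\<dots> = (MR * A1) * (1 / r ^ mdeg \<alpha>) * b ^ N * fN N" by simp
        also have "\<dots> \<le> (MR * A1 + 1) * (1 / r ^ mdeg \<alpha>) * b ^ N * fN N"
          using r b fN[of N] by (intro mult_right_mono) auto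
        also have "\<dots> = (MR * A1 + 1) * r powr (- real (mdeg \<alpha>)) * (b powr (-1/s)) powr (- s * N) * (fact N) powr s"
          unfolding rp Bpow[of b N, OF order.strict_trans2[OF zero_less_one b]] fN_def ..
        finally show "cmod (tcoeff (remR A F h N) \<alpha> $ i) \<le> (MR * A1 + 1) * r powr (- real (mdeg \<alpha>)) * (b powr (-1/s)) powr (- s * N) * (fact N) powr s" .
      qed
    qed
  qed
  have part3: "\<forall>r. 0 < r \<and> r < 1 \<longrightarrow> (\<exists>A3>0. \<exists>B3>0. \<forall>N\<ge>1. \<forall>z. supn z < r / 4 \<longrightarrow>
            supn (remR A F h N z)
              \<le> A3 * B3 powr (- s * N) * (fact N) powr s * (supn z / r) ^ (N + 1))"
  proof (intro allI impI)
    fix r :: real assume "0 < r \<and> r < 1"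
    then have r: "0 < r" "r < 1" by auto
    obtain MR where MR: "MR \<ge> 0" and MRb: "\<And>N i \<gamma>. N + 1 \<le> mdeg \<gamma> \<Longrightarrow>
              cmod (cR A c0 h N i \<gamma>) \<le> MR / r ^ mdeg \<gamma> * (A1 * b ^ N * fN N)"
      using KB[OF r] by blast
    define C where "C = (4/3::real) ^ CARD('n)"
    have C: "C > 0" unfolding C_def by simp
    show "\<exists>A3>0. \<exists>B3>0. \<forall>N\<ge>1. \<forall>z. supn z < r / 4 \<longrightarrow>
            supn (remR A F h N z)
              \<le> A3 * B3 powr (- s * N) * (fact N) powr s * (supn z / r) ^ (N + 1)"
    proof (intro exI conjI allI impI)
      show "(MR * A1 + 1) * 4 * C > 0" using MR A1 C by (simp add: add_nonneg_pos)
      show "(4 * b) powr (-1/s) > 0" using b by simp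
      fix N :: nat and z :: "complex^'n" assume "1 \<le> N" and z: "supn z < r / 4"
      define q where "q = supn z / r"
      have q: "0 \<le> q" "q \<le> 1/4" using z r supn_nonneg[of z] unfolding q_def by (auto simp: field_simps)
      have z1: "supn z < 1" using z r by simp
      define KN where "KN = MR * (A1 * b ^ N * fN N)"
      have KN: "KN \<ge> 0" unfolding KN_def using MR A1 b fN[of N] by auto
      define g where "g \<gamma> = KN * (4 * q) ^ (N + 1) * (1/4) ^ mdeg \<gamma>" for \<gamma> :: "'n \<Rightarrow> nat"
      have gs1: "(\<lambda>\<gamma>::'n\<Rightarrow>nat. (1/4::real) ^ mdeg \<gamma>) summable_on UNIV"
        by (rule geom_multi_summable(1)) auto
      have gsum: "(g has_sum (KN * (4 * q) ^ (N + 1) * (\<Sum>\<^sub>\<infinity>\<gamma>::'n\<Rightarrow>nat. (1/4::real) ^ mdeg \<gamma>))) UNIV"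
        unfolding g_def by (rule has_sum_cmult_right) (use gs1 in simp)
      have gI: "(\<Sum>\<^sub>\<infinity>\<gamma>::'n\<Rightarrow>nat. (1/4::real) ^ mdeg \<gamma>) \<le> C"
        using geom_multi_summable(2)[of "1/4::real", where 'n='n] unfolding C_def by simp
      show "supn (remR A F h N z) \<le> (MR * A1 + 1) * 4 * C * ((4 * b) powr (-1/s)) powr (- s * N) * (fact N) powr s * (supn z / r) ^ (N + 1)"
      proof (rule supn_leI)
        fix i
        have tb: "norm (cR A c0 h N i \<gamma> * mpow z \<gamma>) \<le> g \<gamma>" for \<gamma>
        proof (cases "mdeg \<gamma> \<le> N")
          case True then show ?thesis using low[OF True] KN q unfolding g_def by simp
        next
          case False
          then have deg: "N + 1 \<le> mdeg \<gamma>" by simp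
          have "norm (cR A c0 h N i \<gamma> * mpow z \<gamma>) \<le> cmod (cR A c0 h N i \<gamma>) * supn z ^ mdeg \<gamma>"
            unfolding norm_mult by (intro mult_left_mono norm_mpow_le) auto
          also have "\<dots> \<le> MR / r ^ mdeg \<gamma> * (A1 * b ^ N * fN N) * supn z ^ mdeg \<gamma>"
            using MRb[OF deg] supn_nonneg[of z] by (intro mult_right_mono) auto
          also have "\<dots> = KN * q ^ mdeg \<gamma>" unfolding KN_def q_def by (simp add: power_divide)
          also have "\<dots> \<le> g \<gamma>" unfolding g_def
            using geom_tail_bound[OF q deg] KN by (simp add: mult_left_mono mult.assoc)
          finally show ?thesis .
        qed
        have "cmod (remR A F h N z $ i) \<le> KN * (4 * q) ^ (N + 1) * (\<Sum>\<^sub>\<infinity>\<gamma>::'n\<Rightarrow>nat. (1/4::real) ^ mdeg \<gamma>)"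
          by (rule norm_infsum_le[OF Rsum[OF z1] gsum]) (rule tb)
        also have "\<dots> \<le> KN * (4 * q) ^ (N + 1) * C"
          using KN q gI by (intro mult_left_mono) auto
        also have "\<dots> = (MR * A1) * 4 * C * (4 * b) ^ N * fN N * q ^ (N + 1)"
          unfolding KN_def by (simp add: power_mult_distrib mult_ac)
        also have "\<dots> \<le> (MR * A1 + 1) * 4 * C * (4 * b) ^ N * fN N * q ^ (N + 1)"
          using C b fN[of N] q by (intro mult_right_mono) auto
        also have "\<dots> = (MR * A1 + 1) * 4 * C * ((4 * b) powr (-1/s)) powr (- s * N) * (fact N) powr s * (supn z / r) ^ (N + 1)"
        proof -
          have pos: "(0::real) < 4 * b" using b by simp
          show ?thesis unfolding Bpow[of "4 * b" N, OF pos] fN_def q_def by simp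
        qed
        finally show "cmod (remR A F h N z $ i) \<le> (MR * A1 + 1) * 4 * C * ((4 * b) powr (-1/s)) powr (- s * N) * (fact N) powr s * (supn z / r) ^ (N + 1)" .
      qed
    qed
  qed
  show ?thesis using part1 part2 part3 by blast
qed


end
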